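(* Let $Q=\tau(t)\partial_t+\xi(x)\partial_x+(ku+r(t,x))\partial_u$ be a nonzero vector field, with $k$ a real constant and $\tau,\xi,r$ smooth. Then there is a change of variables of the form $\bar t=T(t)$, $\bar x=X(x)$, $v=mu+Y(t,x)$, or of the form $\bar t=T(x)$, $\bar x=X(t)$, $v=mu+Y(t,x)$ (with $m$ a real constant and $T'X'm\neq0$), which reduces $Q$ to one of the following operators (written in the new variables, still denoted $t,x,u$): $$\partial_t+\partial_x+\epsilon u\partial_u\ (\epsilon=0,1);\quad \partial_t+\epsilon u\partial_u\ (\epsilon=0,1);\quad u\partial_u;\quad g(t,x)\partial_u\ \ (g\neq0).$$
   Context: These changes of variables form the equivalence group of the class of equations $u_{tx}=f(t,x,u)$ ($f_{uu}\neq0$), and vector fields of the given form are the Lie point symmetry generators of equations in this class. All considerations are local. *)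

theory Defs
  imports "HOL-Analysis.Analysis"
begin

coinductive smooth1_on :: "real set \<Rightarrow> (real \<Rightarrow> real) \<Rightarrow> bool" for S where
  "(\<forall>t\<in>S. (f has_real_derivative f' t) (at t)) \<Longrightarrow> smooth1_on S f' \<Longrightarrow> smooth1_on S f"

coinductive smooth2_on :: "(real \<times> real) set \<Rightarrow> (real \<times> real \<Rightarrow> real) \<Rightarrow> bool" for S where
  "(\<forall>p\<in>S. (f has_derivative (\<lambda>h. fa p * fst h + fb p * snd h)) (at p))
   \<Longrightarrow> smooth2_on S fa \<Longrightarrow> smooth2_on S fb \<Longrightarrow> smooth2_on S f"

text \<open>The canonical operators, as vector fields in the new variables (t,x,u), given as the
  triple of their (d_t, d_x, d_u) components; D is the (t,x)-domain on which g must be nonzero.\<close>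
definition canonical_form :: "(real \<times> real \<times> real \<Rightarrow> real \<times> real \<times> real) \<Rightarrow> (real \<times> real) set \<Rightarrow> bool" where
  "canonical_form F D \<longleftrightarrow>
     (\<exists>\<epsilon>\<in>{0,1::real}. F = (\<lambda>(t,x,u). (1, 1, \<epsilon> * u))) \<or>
     (\<exists>\<epsilon>\<in>{0,1::real}. F = (\<lambda>(t,x,u). (1, 0, \<epsilon> * u))) \<or>
     F = (\<lambda>(t,x,u). (0, 0, u)) \<or>
     (\<exists>g. (\<exists>p\<in>D. g p \<noteq> 0) \<and> F = (\<lambda>(t,x,u). (0, 0, g (t,x))))"

end

theory Submission
  imports Defs "HOL-Homology.Invariance_of_Domain"
begin

lemma smooth2_D:
  assumes "smooth2_on S f"
  obtains fa fb where "\<forall>p\<in>S. (f has_derivative (\<lambda>h. fa p * fst h + fb p * snd h)) (at p)"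
    "smooth2_on S fa" "smooth2_on S fb"
  using assms by (cases rule: smooth2_on.cases) blast

lemma smooth2_mono: "smooth2_on S f \<Longrightarrow> S' \<subseteq> S \<Longrightarrow> smooth2_on S' f"
proof (coinduction arbitrary: f rule: smooth2_on.coinduct)
  case (smooth2_on f)
  obtain fa fb where d: "\<forall>p\<in>S. (f has_derivative (\<lambda>h. fa p * fst h + fb p * snd h)) (at p)"
    "smooth2_on S fa" "smooth2_on S fb" using smooth2_on(1) by (rule smooth2_D)
  show ?case
    apply (rule exI[of _ f], rule exI[of _ fa], rule exI[of _ fb])
    using d smooth2_on(2) by blast
qed

lemma smooth2_cong:
  assumes "smooth2_on S f" "open S" "\<And>p. p \<in> S \<Longrightarrow> f p = g p"
  shows "smooth2_on S g"
proof -
  obtain fa fb where d: "\<forall>p\<in>S. (f has_derivative (\<lambda>h. fa p * fst h + fb p * snd h)) (at p)"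
    "smooth2_on S fa" "smooth2_on S fb" using assms(1) by (rule smooth2_D)
  have g: "\<forall>p\<in>S. (g has_derivative (\<lambda>h. fa p * fst h + fb p * snd h)) (at p)"
  proof
    fix p assume "p \<in> S"
    show "(g has_derivative (\<lambda>h. fa p * fst h + fb p * snd h)) (at p)"
      by (rule has_derivative_transform_within_open[OF d(1)[rule_format, OF \<open>p\<in>S\<close>] assms(2) \<open>p\<in>S\<close>])
         (rule assms(3))
  qed
  show ?thesis by (rule smooth2_on.intros[OF g d(2) d(3)])
qed

lemma smooth2_const: "smooth2_on S (\<lambda>_. c)"
proof (rule smooth2_on.coinduct[where X="\<lambda>f. \<exists>c. f = (\<lambda>_. c)"])
  show "\<exists>c'. (\<lambda>_. c) = (\<lambda>_. c')" by blast
next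
  fix f :: "real \<times> real \<Rightarrow> real" assume "\<exists>c. f = (\<lambda>_. c)"
  then obtain c where f: "f = (\<lambda>_. c)" by blast
  have "\<forall>p\<in>S. (f has_derivative (\<lambda>h. 0 * fst h + 0 * snd h)) (at p)"
    unfolding f by (auto intro: has_derivative_eq_rhs[OF has_derivative_const])
  then show "\<exists>fa fb g. f = fa \<and> (\<forall>p\<in>S. (fa has_derivative (\<lambda>h. fb p * fst h + g p * snd h)) (at p)) \<and>
          ((\<exists>c. fb = (\<lambda>_. c)) \<or> smooth2_on S fb) \<and> ((\<exists>c. g = (\<lambda>_. c)) \<or> smooth2_on S g)"
    by (intro exI[of _ f] exI[of _ "\<lambda>_. 0"]) auto
qed

lemma smooth2_fst: "smooth2_on S fst"
proof (rule smooth2_on.intros[where fa="\<lambda>_. 1" and fb="\<lambda>_. 0"])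
  show "\<forall>p\<in>S. (fst has_derivative (\<lambda>h. 1 * fst h + 0 * snd h)) (at p)"
    by (simp add: bounded_linear_fst bounded_linear_imp_has_derivative)
qed (rule smooth2_const)+

lemma smooth2_snd: "smooth2_on S snd"
proof (rule smooth2_on.intros[where fa="\<lambda>_. 0" and fb="\<lambda>_. 1"])
  show "\<forall>p\<in>S. (snd has_derivative (\<lambda>h. 0 * fst h + 1 * snd h)) (at p)"
    by (simp add: bounded_linear_snd bounded_linear_imp_has_derivative)
qed (rule smooth2_const)+

inductive sm :: "(real \<times> real) set \<Rightarrow> (real \<times> real \<Rightarrow> real) \<Rightarrow> bool" for S where
  base: "smooth2_on S f \<Longrightarrow> sm S f"
| add: "sm S f \<Longrightarrow> sm S g \<Longrightarrow> sm S (\<lambda>p. f p + g p)"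
| mul: "sm S f \<Longrightarrow> sm S g \<Longrightarrow> sm S (\<lambda>p. f p * g p)"
| comp: "smooth2_on U h \<Longrightarrow> sm S g1 \<Longrightarrow> sm S g2 \<Longrightarrow> (\<forall>p\<in>S. (g1 p, g2 p) \<in> U)
     \<Longrightarrow> sm S (\<lambda>p. h (g1 p, g2 p))"
| inv: "sm S g \<Longrightarrow> (\<forall>p\<in>S. g p \<noteq> 0) \<Longrightarrow> sm S (\<lambda>p. 1 / g p)"
| exp: "sm S g \<Longrightarrow> sm S (\<lambda>p. exp (g p))"

lemma sm_const: "sm S (\<lambda>_. c)" by (rule sm.base[OF smooth2_const])



lemma deq: "(f has_derivative D) F \<Longrightarrow> (\<And>h. D h = D' h) \<Longrightarrow> (f has_derivative D') F"
  by (erule has_derivative_eq_rhs) (simp add: fun_eq_iff)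

lemma sm_deriv:
  assumes "sm S f"
  shows "\<exists>fa fb. sm S fa \<and> sm S fb \<and>
     (\<forall>p\<in>S. (f has_derivative (\<lambda>h. fa p * fst h + fb p * snd h)) (at p))"
  using assms
proof induction
  case (base f)
  then obtain fa fb where "\<forall>p\<in>S. (f has_derivative (\<lambda>h. fa p * fst h + fb p * snd h)) (at p)"
    "smooth2_on S fa" "smooth2_on S fb" by (rule smooth2_D)
  then show ?case by (intro exI[of _ fa] exI[of _ fb] conjI sm.base)
next
  case (add f g)
  then obtain fa fb ga gb where f: "sm S fa" "sm S fb" "\<forall>p\<in>S. (f has_derivative (\<lambda>h. fa p * fst h + fb p * snd h)) (at p)"
    and g: "sm S ga" "sm S gb" "\<forall>p\<in>S. (g has_derivative (\<lambda>h. ga p * fst h + gb p * snd h)) (at p)"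
    by blast
  have d: "((\<lambda>p. f p + g p) has_derivative (\<lambda>h. (fa p + ga p) * fst h + (fb p + gb p) * snd h)) (at p)"
    if p: "p \<in> S" for p
    by (rule deq[OF has_derivative_add[OF f(3)[rule_format, OF p] g(3)[rule_format, OF p]]])
       (simp add: algebra_simps)
  show ?case
    by (rule exI[of _ "\<lambda>p. fa p + ga p"], rule exI[of _ "\<lambda>p. fb p + gb p"])
       (intro conjI sm.add[OF f(1) g(1)] sm.add[OF f(2) g(2)] ballI d)
next
  case (mul f g)
  then obtain fa fb ga gb where f: "sm S fa" "sm S fb" "\<forall>p\<in>S. (f has_derivative (\<lambda>h. fa p * fst h + fb p * snd h)) (at p)"
    and g: "sm S ga" "sm S gb" "\<forall>p\<in>S. (g has_derivative (\<lambda>h. ga p * fst h + gb p * snd h)) (at p)"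
    by blast
  have d: "((\<lambda>p. f p * g p) has_derivative (\<lambda>h. (f p * ga p + fa p * g p) * fst h + (f p * gb p + fb p * g p) * snd h)) (at p)"
    if p: "p \<in> S" for p
    by (rule deq[OF has_derivative_mult[OF f(3)[rule_format, OF p] g(3)[rule_format, OF p]]])
       (simp add: algebra_simps)
  show ?case
    by (rule exI[of _ "\<lambda>p. f p * ga p + fa p * g p"], rule exI[of _ "\<lambda>p. f p * gb p + fb p * g p"])
       (intro conjI sm.add sm.mul mul.hyps f(1,2) g(1,2) ballI d)
next
  case (comp U h g1 g2)
  then obtain g1a g1b g2a g2b where g1: "sm S g1a" "sm S g1b" "\<forall>p\<in>S. (g1 has_derivative (\<lambda>h. g1a p * fst h + g1b p * snd h)) (at p)"
    and g2: "sm S g2a" "sm S g2b" "\<forall>p\<in>S. (g2 has_derivative (\<lambda>h. g2a p * fst h + g2b p * snd h)) (at p)"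
    by blast
  obtain ha hb where h: "\<forall>p\<in>U. (h has_derivative (\<lambda>k. ha p * fst k + hb p * snd k)) (at p)"
    "smooth2_on U ha" "smooth2_on U hb" using comp.hyps(1) by (rule smooth2_D)
  have hd: "((\<lambda>p. h (g1 p, g2 p)) has_derivative
     (\<lambda>k. (ha (g1 p, g2 p) * g1a p + hb (g1 p, g2 p) * g2a p) * fst k
        + (ha (g1 p, g2 p) * g1b p + hb (g1 p, g2 p) * g2b p) * snd k)) (at p)" if p: "p \<in> S" for p
  proof -
    have i: "((\<lambda>p. (g1 p, g2 p)) has_derivative (\<lambda>k. (g1a p * fst k + g1b p * snd k, g2a p * fst k + g2b p * snd k))) (at p)"
      by (rule has_derivative_Pair[OF g1(3)[rule_format, OF p] g2(3)[rule_format, OF p]])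
    have o: "(h has_derivative (\<lambda>k. ha (g1 p, g2 p) * fst k + hb (g1 p, g2 p) * snd k)) (at (g1 p, g2 p))"
      using h(1) comp.hyps(4) p by blast
    show ?thesis by (rule deq[OF has_derivative_compose[OF i o]]) (simp add: algebra_simps)
  qed
  have c1: "sm S (\<lambda>p. ha (g1 p, g2 p))" by (rule sm.comp[OF h(2) comp.hyps(2,3,4)])
  have c2: "sm S (\<lambda>p. hb (g1 p, g2 p))" by (rule sm.comp[OF h(3) comp.hyps(2,3,4)])
  show ?case
    apply (rule exI[of _ "\<lambda>p. ha (g1 p, g2 p) * g1a p + hb (g1 p, g2 p) * g2a p"],
           rule exI[of _ "\<lambda>p. ha (g1 p, g2 p) * g1b p + hb (g1 p, g2 p) * g2b p"])
    by (intro conjI sm.add sm.mul c1 c2 g1(1,2) g2(1,2) ballI hd)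
next
  case (inv g)
  then obtain ga gb where g: "sm S ga" "sm S gb" "\<forall>p\<in>S. (g has_derivative (\<lambda>h. ga p * fst h + gb p * snd h)) (at p)"
    by blast
  have hd: "((\<lambda>p. 1 / g p) has_derivative
     (\<lambda>k. ((-1) * ga p * (1 / g p) * (1 / g p)) * fst k + ((-1) * gb p * (1 / g p) * (1 / g p)) * snd k)) (at p)"
    if p: "p \<in> S" for p
  proof -
    have "g p \<noteq> 0" using inv.hyps(2) p by blast
    then show ?thesis
      by (rule deq[OF has_derivative_divide[OF has_derivative_const g(3)[rule_format, OF p]]])
        (simp add: field_simps power2_eq_square add_divide_distrib[symmetric] diff_divide_distrib)
  qed
  have i: "sm S (\<lambda>p. 1 / g p)" by (rule sm.inv[OF inv.hyps])
  show ?case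
    apply (rule exI[of _ "\<lambda>p. (-1) * ga p * (1 / g p) * (1 / g p)"],
           rule exI[of _ "\<lambda>p. (-1) * gb p * (1 / g p) * (1 / g p)"])
    by (intro conjI sm.mul sm_const i g(1,2) ballI hd)
next
  case (exp g)
  then obtain ga gb where g: "sm S ga" "sm S gb" "\<forall>p\<in>S. (g has_derivative (\<lambda>h. ga p * fst h + gb p * snd h)) (at p)"
    by blast
  have hd: "((\<lambda>p. exp (g p)) has_derivative
     (\<lambda>k. (exp (g p) * ga p) * fst k + (exp (g p) * gb p) * snd k)) (at p)"
    if p: "p \<in> S" for p
    by (rule deq[OF has_derivative_exp[OF g(3)[rule_format, OF p]]]) (simp add: algebra_simps)
  have e: "sm S (\<lambda>p. exp (g p))" by (rule sm.exp[OF exp.hyps(1)])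
  show ?case
    apply (rule exI[of _ "\<lambda>p. exp (g p) * ga p"], rule exI[of _ "\<lambda>p. exp (g p) * gb p"])
    by (intro conjI sm.mul e g(1,2) ballI hd)
qed

lemma sm_smooth2: "sm S f \<Longrightarrow> smooth2_on S f"
proof (coinduction arbitrary: f rule: smooth2_on.coinduct)
  case (smooth2_on f)
  obtain fa fb where "sm S fa" "sm S fb" "\<forall>p\<in>S. (f has_derivative (\<lambda>h. fa p * fst h + fb p * snd h)) (at p)"
    using sm_deriv[OF smooth2_on] by blast
  then show ?case 
    apply (rule_tac exI[of _ f], rule_tac exI[of _ fa], rule_tac exI[of _ fb])
    by blast
qed

lemma sm_fst: "sm S fst" by (rule sm.base[OF smooth2_fst])
lemma sm_snd: "sm S snd" by (rule sm.base[OF smooth2_snd])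

lemma sm_diff: "sm S f \<Longrightarrow> sm S g \<Longrightarrow> sm S (\<lambda>p. f p - g p)"
proof -
  assume f: "sm S f" and g: "sm S g"
  have "sm S (\<lambda>p. f p + (\<lambda>_. -1) p * g p)" by (intro sm.add sm.mul f g sm_const)
  moreover have "(\<lambda>p. f p + (\<lambda>_. -1) p * g p) = (\<lambda>p. f p - g p)" by auto
  ultimately show ?thesis by simp
qed

lemma sm_div: "sm S f \<Longrightarrow> sm S g \<Longrightarrow> \<forall>p\<in>S. g p \<noteq> 0 \<Longrightarrow> sm S (\<lambda>p. f p / g p)"
proof -
  assume f: "sm S f" and g: "sm S g" "\<forall>p\<in>S. g p \<noteq> 0"
  have "sm S (\<lambda>p. f p * (1 / g p))" by (intro sm.mul f sm.inv g)
  moreover have "(\<lambda>p. f p * (1 / g p)) = (\<lambda>p. f p / g p)" by auto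
  ultimately show ?thesis by simp
qed

lemma smooth1_D:
  assumes "smooth1_on S f"
  obtains f' where "\<forall>t\<in>S. (f has_real_derivative f' t) (at t)" "smooth1_on S f'"
  using assms by (cases rule: smooth1_on.cases) blast

lemma smooth1_mono: "smooth1_on S f \<Longrightarrow> S' \<subseteq> S \<Longrightarrow> smooth1_on S' f"
proof (coinduction arbitrary: f rule: smooth1_on.coinduct)
  case (smooth1_on f)
  obtain f' where d: "\<forall>t\<in>S. (f has_real_derivative f' t) (at t)" "smooth1_on S f'"
    using smooth1_on(1) by (rule smooth1_D)
  show ?case
    apply (rule exI[of _ f], rule exI[of _ f'])
    using d smooth1_on(2) by blast
qed

lemma smooth2_lift_fst:
  assumes "smooth1_on I f" "fst ` S \<subseteq> I"
  shows "smooth2_on S (\<lambda>p. f (fst p))"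
proof (rule smooth2_on.coinduct[where X="\<lambda>g. \<exists>f. smooth1_on I f \<and> g = (\<lambda>p. f (fst p))"])
  show "\<exists>f'. smooth1_on I f' \<and> (\<lambda>p. f (fst p)) = (\<lambda>p. f' (fst p))" using assms(1) by blast
next
  fix g :: "real \<times> real \<Rightarrow> real" assume "\<exists>f. smooth1_on I f \<and> g = (\<lambda>p. f (fst p))"
  then obtain f where f: "smooth1_on I f" and g: "g = (\<lambda>p. f (fst p))" by blast
  obtain f' where d: "\<forall>t\<in>I. (f has_real_derivative f' t) (at t)" "smooth1_on I f'"
    using f by (rule smooth1_D)
  have "(g has_derivative (\<lambda>h. f' (fst p) * fst h + 0 * snd h)) (at p)" if p: "p \<in> S" for p
  proof -
    have "fst p \<in> I" using p assms(2) by blast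
    then have "(f has_derivative (\<lambda>h. f' (fst p) * h)) (at (fst p))"
      using d(1) by (simp add: has_field_derivative_def)
    from has_derivative_compose[OF has_derivative_fst[OF has_derivative_ident] this]
    show ?thesis unfolding g by (rule deq) simp
  qed
  then show "\<exists>fa fb ga. g = fa \<and> (\<forall>p\<in>S. (fa has_derivative (\<lambda>h. fb p * fst h + ga p * snd h)) (at p)) \<and>
          ((\<exists>f. smooth1_on I f \<and> fb = (\<lambda>p. f (fst p))) \<or> smooth2_on S fb) \<and>
          ((\<exists>f. smooth1_on I f \<and> ga = (\<lambda>p. f (fst p))) \<or> smooth2_on S ga)"
    using d(2) smooth2_const by (intro exI[of _ g] exI[of _ "\<lambda>p. f' (fst p)"] exI[of _ "\<lambda>_. 0"]) blast
qed

lemma smooth2_lift_snd: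
  assumes "smooth1_on I f" "snd ` S \<subseteq> I"
  shows "smooth2_on S (\<lambda>p. f (snd p))"
proof (rule smooth2_on.coinduct[where X="\<lambda>g. \<exists>f. smooth1_on I f \<and> g = (\<lambda>p. f (snd p))"])
  show "\<exists>f'. smooth1_on I f' \<and> (\<lambda>p. f (snd p)) = (\<lambda>p. f' (snd p))" using assms(1) by blast
next
  fix g :: "real \<times> real \<Rightarrow> real" assume "\<exists>f. smooth1_on I f \<and> g = (\<lambda>p. f (snd p))"
  then obtain f where f: "smooth1_on I f" and g: "g = (\<lambda>p. f (snd p))" by blast
  obtain f' where d: "\<forall>t\<in>I. (f has_real_derivative f' t) (at t)" "smooth1_on I f'"
    using f by (rule smooth1_D)
  have "(g has_derivative (\<lambda>h. 0 * fst h + f' (snd p) * snd h)) (at p)" if p: "p \<in> S" for p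
  proof -
    have "snd p \<in> I" using p assms(2) by blast
    then have "(f has_derivative (\<lambda>h. f' (snd p) * h)) (at (snd p))"
      using d(1) by (simp add: has_field_derivative_def)
    from has_derivative_compose[OF has_derivative_snd[OF has_derivative_ident] this]
    show ?thesis unfolding g by (rule deq) simp
  qed
  then show "\<exists>fa fb ga. g = fa \<and> (\<forall>p\<in>S. (fa has_derivative (\<lambda>h. fb p * fst h + ga p * snd h)) (at p)) \<and>
          ((\<exists>f. smooth1_on I f \<and> fb = (\<lambda>p. f (snd p))) \<or> smooth2_on S fb) \<and>
          ((\<exists>f. smooth1_on I f \<and> ga = (\<lambda>p. f (snd p))) \<or> smooth2_on S ga)"
    using d(2) smooth2_const by (intro exI[of _ g] exI[of _ "\<lambda>_. 0"] exI[of _ "\<lambda>p. f' (snd p)"]) blast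
qed

lemma smooth1_unlift:
  assumes "open I" "smooth2_on (I \<times> UNIV) (\<lambda>p. f (fst p))"
  shows "smooth1_on I f"
proof (rule smooth1_on.coinduct[where X="\<lambda>f. smooth2_on (I \<times> UNIV) (\<lambda>p. f (fst p))"])
  show "smooth2_on (I \<times> UNIV) (\<lambda>p. f (fst p))" by (rule assms(2))
next
  fix f :: "real \<Rightarrow> real" assume "smooth2_on (I \<times> UNIV) (\<lambda>p. f (fst p))"
  then obtain fa fb where d: "\<forall>p\<in>I \<times> UNIV. ((\<lambda>p. f (fst p)) has_derivative (\<lambda>h. fa p * fst h + fb p * snd h)) (at p)"
    "smooth2_on (I \<times> UNIV) fa" "smooth2_on (I \<times> UNIV) fb" by (rule smooth2_D)
  have line: "(f has_real_derivative fa (t, y)) (at t)" if t: "t \<in> I" for t y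
  proof -
    have i: "((\<lambda>s. (s, y)) has_derivative (\<lambda>h. (h, 0))) (at t)"
      by (rule has_derivative_Pair[OF has_derivative_ident has_derivative_const, THEN deq]) simp
    have "((\<lambda>s. f (fst (s, y))) has_derivative (\<lambda>h. fa (t, y) * fst (h, 0) + fb (t, y) * snd (h, 0))) (at t)"
      using has_derivative_compose[OF i d(1)[rule_format, of "(t, y)"]] t by simp
    then have "(f has_derivative (\<lambda>h. fa (t, y) * h)) (at t)" by simp
    then show ?thesis unfolding has_field_derivative_def by simp
  qed
  have eq: "fa p = fa (fst p, 0)" if p: "p \<in> I \<times> UNIV" for p
    using line[of "fst p" "snd p"] line[of "fst p" 0] p DERIV_unique by (cases p) auto
  have s: "smooth2_on (I \<times> UNIV) (\<lambda>p. fa (fst p, 0))"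
    by (rule smooth2_cong[OF d(2)]) (use assms(1) eq in \<open>auto intro: open_Times\<close>)
  show "\<exists>fa fb. f = fa \<and> (\<forall>t\<in>I. (fa has_real_derivative fb t) (at t)) \<and>
        (smooth2_on (I \<times> UNIV) (\<lambda>p. fb (fst p)) \<or> smooth1_on I fb)"
    apply (rule exI[of _ f], rule exI[of _ "\<lambda>t. fa (t, 0)"])
    using line s by auto
qed

lemma smooth1_const: "smooth1_on I (\<lambda>_. c)"
proof (rule smooth1_on.coinduct[where X="\<lambda>f. \<exists>c. f = (\<lambda>_. c)"])
  show "\<exists>c'. (\<lambda>_. c) = (\<lambda>_. c')" by blast
next
  fix f :: "real \<Rightarrow> real" assume "\<exists>c. f = (\<lambda>_. c)"
  then obtain c where f: "f = (\<lambda>_. c)" by blast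
  show "\<exists>fa fb. f = fa \<and> (\<forall>t\<in>I. (fa has_real_derivative fb t) (at t)) \<and>
          ((\<exists>c. fb = (\<lambda>_. c)) \<or> smooth1_on I fb)"
    by (intro exI[of _ f] exI[of _ "\<lambda>_. 0"]) (auto simp: f)
qed

lemma smooth2_cont: "smooth2_on S f \<Longrightarrow> continuous_on S f"
  by (erule smooth2_D) (meson continuous_at_imp_continuous_on has_derivative_continuous)

lemma PI_deriv:
  fixes f fb :: "real \<times> real \<Rightarrow> real"
  assumes J: "open J" "convex J" and a: "\<alpha> < a"
    and d: "\<forall>p\<in>{\<alpha><..<\<beta>} \<times> J. (f has_derivative (\<lambda>h. fa p * fst h + fb p * snd h)) (at p)"
    and cf: "continuous_on ({\<alpha><..<\<beta>} \<times> J) f" and cfb: "continuous_on ({\<alpha><..<\<beta>} \<times> J) fb"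
    and t: "a < t" "t < \<beta>" and x: "x \<in> J"
  shows "((\<lambda>p. integral {a..fst p} (\<lambda>s. f (s, snd p))) has_derivative
           (\<lambda>h. f (t, x) * fst h + integral {a..t} (\<lambda>s. fb (s, x)) * snd h)) (at (t, x))"
proof -
  define F where "F x t = integral {a..t} (\<lambda>s. f (s, x))" for x t
  define Y where "Y = {a<..<\<beta>}"
  have sub: "{a..t'} \<subseteq> {\<alpha><..<\<beta>}" if "t' < \<beta>" for t' using a that by auto
  have cfx: "continuous_on {a..t'} (\<lambda>s. f (s, x'))" if "t' < \<beta>" "x' \<in> J" for t' x'
    by (rule continuous_on_compose2[OF cf]) (use sub that in \<open>auto intro!: continuous_intros\<close>)
  have fx: "((\<lambda>x. F x t) has_derivative (\<lambda>h. integral {a..t} (\<lambda>s. fb (s, x)) * h)) (at x within J)"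
  proof -
    have "((\<lambda>x. integral (cbox a t) (\<lambda>s. f (s, x))) has_field_derivative integral (cbox a t) (\<lambda>s. fb (s, x))) (at x within J)"
    proof (rule leibniz_rule_field_derivative[where fx="\<lambda>x s. fb (s, x)"])
      fix x' s assume x': "x' \<in> J" and s: "s \<in> cbox a t"
      have sp: "(s, x') \<in> {\<alpha><..<\<beta>} \<times> J" using s x' sub[OF t(2)] by auto
      have i: "((\<lambda>y. (s, y)) has_derivative (\<lambda>h. (0, h))) (at x')"
        by (rule has_derivative_Pair[OF has_derivative_const has_derivative_ident, THEN deq]) simp
      have "((\<lambda>y. f (s, y)) has_derivative (\<lambda>h. fb (s, x') * h)) (at x')"
        using has_derivative_compose[OF i d[rule_format, OF sp]] by simp
      then show "((\<lambda>y. f (s, y)) has_field_derivative fb (s, x')) (at x' within J)"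
        unfolding has_field_derivative_def by (rule has_derivative_at_withinI)
    next
      fix x' assume "x' \<in> J"
      then show "(\<lambda>s. f (s, x')) integrable_on cbox a t"
        using cfx[OF t(2)] by (simp add: integrable_continuous_real)
    next
      have "continuous_on (J \<times> cbox a t) (\<lambda>p. fb (snd p, fst p))"
        by (rule continuous_on_compose2[OF cfb]) (use sub[OF t(2)] in \<open>auto intro!: continuous_intros\<close>)
      then show "continuous_on (J \<times> cbox a t) (\<lambda>(x, s). fb (s, x))"
        by (simp add: case_prod_beta')
    qed (use x J in auto)
    then show ?thesis unfolding F_def has_field_derivative_def by simp
  qed
  have fy: "((\<lambda>t. F x' t) has_derivative blinfun_apply (blinfun_mult_right (f (t', x')))) (at t' within Y)"
    if x': "x' \<in> J" and t': "t' \<in> Y" for x' t'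
  proof -
    define b where "b = (t' + \<beta>) / 2"
    have tb: "a < t'" "t' < b" "b < \<beta>" using t' by (auto simp: Y_def b_def)
    have "((\<lambda>u. integral {a..u} (\<lambda>s. f (s, x'))) has_real_derivative f (t', x')) (at t' within {a..b})"
      by (rule integral_has_real_derivative[OF cfx[OF tb(3) x']]) (use tb in auto)
    moreover have "at t' within {a..b} = at t'"
      by (rule at_within_interior) (use tb in auto)
    ultimately have "((\<lambda>u. integral {a..u} (\<lambda>s. f (s, x'))) has_real_derivative f (t', x')) (at t')" by simp
    then show ?thesis unfolding F_def has_field_derivative_eq_has_derivative_blinfun[symmetric]
      by (rule has_field_derivative_at_within)
  qed
  have cc: "continuous (at (x, t) within J \<times> Y) (\<lambda>(x, t). blinfun_mult_right (f (t, x)))"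
  proof -
    have "continuous_on (J \<times> Y) (\<lambda>p. f (snd p, fst p))"
      by (rule continuous_on_compose2[OF cf]) (use a in \<open>auto simp: Y_def intro!: continuous_intros\<close>)
    then have "continuous_on (J \<times> Y) (\<lambda>(x, t). f (t, x))" by (simp add: case_prod_beta')
    then have "continuous_on (J \<times> Y) (\<lambda>(x, t). blinfun_mult_right (f (t, x)))"
      by (auto simp: split_beta intro!: continuous_intros)
    moreover have "(x, t) \<in> J \<times> Y" using x t by (auto simp: Y_def)
    ultimately show ?thesis using J by (simp add: continuous_on_eq_continuous_within)
  qed
  have "((\<lambda>(x, t). F x t) has_derivative (\<lambda>(tx, ty). integral {a..t} (\<lambda>s. fb (s, x)) * tx + blinfun_apply (blinfun_mult_right (f (t, x))) ty)) (at (x, t) within J \<times> Y)"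
    by (rule has_derivative_partialsI[OF fx fy cc]) (use t in \<open>auto simp: Y_def\<close>)
  moreover have "at (x, t) within J \<times> Y = at (x, t)"
    by (rule at_within_open) (use t x J in \<open>auto simp: Y_def intro: open_Times\<close>)
  ultimately have D: "((\<lambda>(x, t). F x t) has_derivative (\<lambda>(tx, ty). integral {a..t} (\<lambda>s. fb (s, x)) * tx + f (t, x) * ty)) (at (x, t))"
    by simp
  have sw: "((\<lambda>p. (snd p, fst p)) has_derivative (\<lambda>h. (snd h, fst h))) (at (t, x))"
    by (rule has_derivative_Pair[OF has_derivative_snd[OF has_derivative_ident] has_derivative_fst[OF has_derivative_ident]])
  have "((\<lambda>p. (\<lambda>(x, t). F x t) (snd p, fst p)) has_derivative (\<lambda>h. (\<lambda>(tx, ty). integral {a..t} (\<lambda>s. fb (s, x)) * tx + f (t, x) * ty) (snd h, fst h))) (at (t, x))"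
  proof -
    have D': "((\<lambda>(x, t). F x t) has_derivative (\<lambda>(tx, ty). integral {a..t} (\<lambda>s. fb (s, x)) * tx + f (t, x) * ty)) (at ((\<lambda>p. (snd p, fst p)) (t, x)))"
      using D by simp
    show ?thesis using has_derivative_compose[OF sw D'] by simp
  qed
  then have "((\<lambda>p. integral {a..fst p} (\<lambda>s. f (s, snd p))) has_derivative (\<lambda>h. integral {a..t} (\<lambda>s. fb (s, x)) * snd h + f (t, x) * fst h)) (at (t, x))"
    unfolding F_def by simp
  then show ?thesis by (rule deq) (simp add: algebra_simps)
qed

lemma PI_smooth:
  assumes J: "open J" "convex J" and a: "\<alpha> < a" and f: "smooth2_on ({\<alpha><..<\<beta>} \<times> J) f"
  shows "smooth2_on ({a<..<\<beta>} \<times> J) (\<lambda>p. integral {a..fst p} (\<lambda>s. f (s, snd p)))"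
proof (rule smooth2_on.coinduct[where X="\<lambda>G. \<exists>f. smooth2_on ({\<alpha><..<\<beta>} \<times> J) f \<and> G = (\<lambda>p. integral {a..fst p} (\<lambda>s. f (s, snd p)))"])
  show "\<exists>f'. smooth2_on ({\<alpha><..<\<beta>} \<times> J) f' \<and> (\<lambda>p. integral {a..fst p} (\<lambda>s. f (s, snd p))) = (\<lambda>p. integral {a..fst p} (\<lambda>s. f' (s, snd p)))"
    using f by blast
next
  fix G assume "\<exists>f. smooth2_on ({\<alpha><..<\<beta>} \<times> J) f \<and> G = (\<lambda>p. integral {a..fst p} (\<lambda>s. f (s, snd p)))"
  then obtain f where f: "smooth2_on ({\<alpha><..<\<beta>} \<times> J) f" and G: "G = (\<lambda>p. integral {a..fst p} (\<lambda>s. f (s, snd p)))" by blast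
  obtain fa fb where d: "\<forall>p\<in>{\<alpha><..<\<beta>} \<times> J. (f has_derivative (\<lambda>h. fa p * fst h + fb p * snd h)) (at p)"
    "smooth2_on ({\<alpha><..<\<beta>} \<times> J) fa" "smooth2_on ({\<alpha><..<\<beta>} \<times> J) fb" using f by (rule smooth2_D)
  have D: "\<forall>p\<in>{a<..<\<beta>} \<times> J. (G has_derivative (\<lambda>h. f p * fst h + integral {a..fst p} (\<lambda>s. fb (s, snd p)) * snd h)) (at p)"
  proof
    fix p assume p: "p \<in> {a<..<\<beta>} \<times> J"
    obtain t x where px: "p = (t, x)" by (cases p)
    show "(G has_derivative (\<lambda>h. f p * fst h + integral {a..fst p} (\<lambda>s. fb (s, snd p)) * snd h)) (at p)"
      unfolding G px fst_conv snd_conv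
      by (rule PI_deriv[OF J a d(1) smooth2_cont[OF f] smooth2_cont[OF d(3)]]) (use p px in auto)
  qed
  have m: "smooth2_on ({a<..<\<beta>} \<times> J) f" by (rule smooth2_mono[OF f]) (use a in auto)
  show "\<exists>fa fb g. G = fa \<and> (\<forall>p\<in>{a<..<\<beta>} \<times> J. (fa has_derivative (\<lambda>h. fb p * fst h + g p * snd h)) (at p)) \<and>
         ((\<exists>f. smooth2_on ({\<alpha><..<\<beta>} \<times> J) f \<and> fb = (\<lambda>p. integral {a..fst p} (\<lambda>s. f (s, snd p)))) \<or> smooth2_on ({a<..<\<beta>} \<times> J) fb) \<and>
         ((\<exists>f. smooth2_on ({\<alpha><..<\<beta>} \<times> J) f \<and> g = (\<lambda>p. integral {a..fst p} (\<lambda>s. f (s, snd p)))) \<or> smooth2_on ({a<..<\<beta>} \<times> J) g)"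
    apply (rule exI[of _ G], rule exI[of _ f], rule exI[of _ "\<lambda>p. integral {a..fst p} (\<lambda>s. fb (s, snd p))"])
    using D m d(3) by blast
qed

lemma PI_derivs:
  assumes J: "open J" "convex J" and a: "\<alpha> < a" and f: "smooth2_on ({\<alpha><..<\<beta>} \<times> J) f"
  shows "\<exists>Gb. \<forall>p\<in>{a<..<\<beta>} \<times> J. ((\<lambda>p. integral {a..fst p} (\<lambda>s. f (s, snd p))) has_derivative (\<lambda>h. f p * fst h + Gb p * snd h)) (at p)"
proof -
  obtain fa fb where d: "\<forall>p\<in>{\<alpha><..<\<beta>} \<times> J. (f has_derivative (\<lambda>h. fa p * fst h + fb p * snd h)) (at p)"
    "smooth2_on ({\<alpha><..<\<beta>} \<times> J) fa" "smooth2_on ({\<alpha><..<\<beta>} \<times> J) fb" using f by (rule smooth2_D)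
  have "\<forall>p\<in>{a<..<\<beta>} \<times> J. ((\<lambda>p. integral {a..fst p} (\<lambda>s. f (s, snd p))) has_derivative (\<lambda>h. f p * fst h + integral {a..fst p} (\<lambda>s. fb (s, snd p)) * snd h)) (at p)"
  proof
    fix p assume p: "p \<in> {a<..<\<beta>} \<times> J"
    obtain t x where px: "p = (t, x)" by (cases p)
    show "((\<lambda>p. integral {a..fst p} (\<lambda>s. f (s, snd p))) has_derivative (\<lambda>h. f p * fst h + integral {a..fst p} (\<lambda>s. fb (s, snd p)) * snd h)) (at p)"
      unfolding px fst_conv snd_conv
      by (rule PI_deriv[OF J a d(1) smooth2_cont[OF f] smooth2_cont[OF d(3)]]) (use p px in auto)
  qed
  then show ?thesis by (rule exI[where x="\<lambda>p. integral {a..fst p} (\<lambda>s. fb (s, snd p))"])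
qed

lemma smooth1_liftU: "smooth1_on I f \<Longrightarrow> sm (I \<times> UNIV) (\<lambda>p. f (fst p))"
  by (rule sm.base, rule smooth2_lift_fst) auto

lemma smooth1_mul: "open I \<Longrightarrow> smooth1_on I f \<Longrightarrow> smooth1_on I g \<Longrightarrow> smooth1_on I (\<lambda>t. f t * g t)"
  by (rule smooth1_unlift, assumption, rule sm_smooth2, rule sm.mul; rule smooth1_liftU)

lemma smooth1_add: "open I \<Longrightarrow> smooth1_on I f \<Longrightarrow> smooth1_on I g \<Longrightarrow> smooth1_on I (\<lambda>t. f t + g t)"
  by (rule smooth1_unlift, assumption, rule sm_smooth2, rule sm.add; rule smooth1_liftU)

lemma smooth1_cmul: "open I \<Longrightarrow> smooth1_on I f \<Longrightarrow> smooth1_on I (\<lambda>t. c * f t)"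
  by (rule smooth1_mul[OF _ smooth1_const])

lemma smooth1_inv: "open I \<Longrightarrow> smooth1_on I f \<Longrightarrow> \<forall>t\<in>I. f t \<noteq> 0 \<Longrightarrow> smooth1_on I (\<lambda>t. 1 / f t)"
  by (rule smooth1_unlift, assumption, rule sm_smooth2, rule sm.inv, rule smooth1_liftU) auto

lemma smooth1_id: "open I \<Longrightarrow> smooth1_on I (\<lambda>t. t)"
  by (rule smooth1_unlift, assumption) (simp add: smooth2_fst)

lemma smooth1_from_deriv:
  "\<forall>t\<in>I. (F has_real_derivative f t) (at t) \<Longrightarrow> smooth1_on I f \<Longrightarrow> smooth1_on I F"
  by (rule smooth1_on.intros)

lemma smooth1_cont: "smooth1_on S f \<Longrightarrow> continuous_on S f"
  by (erule smooth1_D) (meson continuous_at_imp_continuous_on DERIV_isCont)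

lemma smooth1_inverse:
  assumes J: "open J" and B: "smooth1_on J B" "\<forall>x\<in>J. (B has_real_derivative 1 / \<xi> x) (at x)"
    and xi: "smooth1_on J \<xi>" "\<forall>x\<in>J. \<xi> x \<noteq> 0" and g: "\<forall>x\<in>J. g (B x) = x"
  shows "smooth1_on (B ` J) g" "\<forall>x\<in>J. (g has_real_derivative \<xi> x) (at (B x))"
proof -
  have gd: "(g has_real_derivative \<xi> x) (at (B x))" if x: "x \<in> J" for x
  proof -
    have "(g has_derivative (\<lambda>h. \<xi> x * h)) (at (B x))"
    proof (rule has_derivative_inverse_strong[OF J x])
      show "continuous_on J B" by (rule smooth1_cont[OF B(1)])
      show "\<And>x. x \<in> J \<Longrightarrow> g (B x) = x" using g by blast
      show "(B has_derivative (\<lambda>h. (1 / \<xi> x) * h)) (at x)"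
        using B(2) x unfolding has_field_derivative_def by blast
      show "(\<lambda>h. (1 / \<xi> x) * h) \<circ> (\<lambda>h. \<xi> x * h) = id" using xi(2) x by (auto simp: fun_eq_iff)
    qed
    then show ?thesis by (simp add: has_field_derivative_def)
  qed
  then show "\<forall>x\<in>J. (g has_real_derivative \<xi> x) (at (B x))" by blast
  show "smooth1_on (B ` J) g"
  proof (rule smooth1_on.coinduct[where X="\<lambda>G. \<exists>h. smooth1_on J h \<and> G = (\<lambda>y. h (g y))"])
    show "\<exists>h. smooth1_on J h \<and> g = (\<lambda>y. h (g y))"
      by (rule exI[of _ "\<lambda>t. t"]) (simp add: smooth1_id[OF J])
  next
    fix G assume "\<exists>h. smooth1_on J h \<and> G = (\<lambda>y. h (g y))"
    then obtain h where h: "smooth1_on J h" and G: "G = (\<lambda>y. h (g y))" by blast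
    obtain h' where hd: "\<forall>t\<in>J. (h has_real_derivative h' t) (at t)" "smooth1_on J h'"
      using h by (rule smooth1_D)
    have D: "\<forall>y\<in>B ` J. (G has_real_derivative (\<lambda>y. h' (g y) * \<xi> (g y)) y) (at y)"
    proof
      fix y assume "y \<in> B ` J"
      then obtain x where x: "x \<in> J" "y = B x" by blast
      have gx: "g y = x" using g x by auto
      have h1: "(h has_real_derivative h' x) (at (g (B x)))" using hd(1) x g by simp
      have "((\<lambda>y. h (g y)) has_real_derivative h' (g y) * \<xi> x) (at y)"
        using DERIV_chain2[OF h1 gd[OF x(1)]] x gx by simp
      then show "(G has_real_derivative (\<lambda>y. h' (g y) * \<xi> (g y)) y) (at y)" using G gx by simp
    qed
    have "smooth1_on J (\<lambda>t. h' t * \<xi> t)" by (rule smooth1_mul[OF J hd(2) xi(1)])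
    then show "\<exists>f f'. G = f \<and> (\<forall>t\<in>B ` J. (f has_real_derivative f' t) (at t)) \<and>
          ((\<exists>h. smooth1_on J h \<and> f' = (\<lambda>y. h (g y))) \<or> smooth1_on (B ` J) f')"
      using D by (intro exI[of _ G] exI[of _ "\<lambda>y. h' (g y) * \<xi> (g y)"]) auto
  qed
qed

lemma open_rect:
  fixes U0 :: "(real \<times> real) set"
  assumes "open U0" "(t0, x0) \<in> U0"
  shows "\<exists>e>0. {t0 - e<..<t0 + e} \<times> {x0 - e<..<x0 + e} \<subseteq> U0"
proof -
  obtain r where r: "r > 0" "ball (t0, x0) r \<subseteq> U0" using assms open_contains_ball by blast
  have "{t0 - r/2<..<t0 + r/2} \<times> {x0 - r/2<..<x0 + r/2} \<subseteq> ball (t0, x0) r"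
  proof
    fix p assume p: "p \<in> {t0 - r/2<..<t0 + r/2} \<times> {x0 - r/2<..<x0 + r/2}"
    obtain t x where px: "p = (t, x)" by (cases p)
    have "dist (t0, x0) (t, x) \<le> dist t0 t + dist x0 x"
      unfolding dist_Pair_Pair using sqrt_sum_squares_le_sum[OF zero_le_dist zero_le_dist] .
    then show "p \<in> ball (t0, x0) r" using p px by (auto simp: dist_real_def)
  qed
  then show ?thesis using r by (intro exI[of _ "r/2"]) auto
qed

lemma lift_deriv: "(f has_real_derivative D) (at (fst p)) \<Longrightarrow>
   ((\<lambda>p. f (fst p)) has_derivative (\<lambda>h. D * fst h + 0 * snd h)) (at p)"
  unfolding has_field_derivative_def
  by (rule deq[OF has_derivative_compose[OF has_derivative_fst[OF has_derivative_ident]]]) simp_all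

lemma SOL:
  fixes \<tau> A :: "real \<Rightarrow> real" and \<rho> :: "real \<times> real \<Rightarrow> real"
  assumes P: "open P" "convex P" and a: "\<alpha> < a"
    and Ad: "\<forall>t\<in>{\<alpha><..<\<beta>}. (A has_real_derivative 1 / \<tau> t) (at t)" and As: "smooth1_on {\<alpha><..<\<beta>} A"
    and ts: "smooth1_on {\<alpha><..<\<beta>} \<tau>" and tn: "\<forall>t\<in>{\<alpha><..<\<beta>}. \<tau> t \<noteq> 0"
    and rs: "smooth2_on ({\<alpha><..<\<beta>} \<times> P) \<rho>"
    and V: "V = (\<lambda>p. - exp (k * A (fst p)) * integral {a..fst p} (\<lambda>s. exp (- k * A s) * \<rho> (s, snd p) / \<tau> s))"
  shows "smooth2_on ({a<..<\<beta>} \<times> P) V"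
    "\<forall>p\<in>{a<..<\<beta>} \<times> P. \<exists>Vt Vb. (V has_derivative (\<lambda>h. Vt * fst h + Vb * snd h)) (at p) \<and>
        \<tau> (fst p) * Vt = k * V p - \<rho> p"
proof -
  define S0 where "S0 = {\<alpha><..<\<beta>} \<times> P"
  define S' where "S' = {a<..<\<beta>} \<times> P"
  have sub: "S' \<subseteq> S0" using a by (auto simp: S0_def S'_def)
  have fS0: "fst ` S0 \<subseteq> {\<alpha><..<\<beta>}" by (auto simp: S0_def)
  have lA: "sm S0 (\<lambda>p. A (fst p))" by (rule sm.base, rule smooth2_lift_fst[OF As fS0])
  have lt: "sm S0 (\<lambda>p. \<tau> (fst p))" by (rule sm.base, rule smooth2_lift_fst[OF ts fS0])
  have phi: "sm S0 (\<lambda>p. exp (- k * A (fst p)) * \<rho> p / \<tau> (fst p))"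
  proof (rule sm_div)
    show "sm S0 (\<lambda>p. exp (- k * A (fst p)) * \<rho> p)"
    proof (rule sm.mul)
      show "sm S0 (\<lambda>p. exp (- k * A (fst p)))" by (rule sm.exp, rule sm.mul, rule sm_const, rule lA)
      show "sm S0 \<rho>" by (rule sm.base) (simp add: S0_def rs)
    qed
    show "sm S0 (\<lambda>p. \<tau> (fst p))" by (rule lt)
    show "\<forall>p\<in>S0. \<tau> (fst p) \<noteq> 0" using tn by (auto simp: S0_def)
  qed
  have phis: "smooth2_on ({\<alpha><..<\<beta>} \<times> P) (\<lambda>p. exp (- k * A (fst p)) * \<rho> p / \<tau> (fst p))"
    using sm_smooth2[OF phi] by (simp add: S0_def)
  have Gs: "smooth2_on S' (\<lambda>p. integral {a..fst p} (\<lambda>s. exp (- k * A s) * \<rho> (s, snd p) / \<tau> s))"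
    using PI_smooth[OF P a phis] by (simp add: S'_def)
  obtain Gb where Gd: "\<forall>p\<in>S'. ((\<lambda>p. integral {a..fst p} (\<lambda>s. exp (- k * A s) * \<rho> (s, snd p) / \<tau> s)) has_derivative
      (\<lambda>h. exp (- k * A (fst p)) * \<rho> p / \<tau> (fst p) * fst h + Gb p * snd h)) (at p)"
    using PI_derivs[OF P a phis] by (auto simp: S'_def)
  have lA': "sm S' (\<lambda>p. A (fst p))" by (rule sm.base, rule smooth2_lift_fst[OF As]) (use sub fS0 in auto)
  show "smooth2_on ({a<..<\<beta>} \<times> P) V"
  proof -
    have "sm S' (\<lambda>p. - exp (k * A (fst p)) * integral {a..fst p} (\<lambda>s. exp (- k * A s) * \<rho> (s, snd p) / \<tau> s))"
    proof (rule sm.mul)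
      show "sm S' (\<lambda>p. - exp (k * A (fst p)))"
      proof -
        have "sm S' (\<lambda>p. (\<lambda>_. -1) p * exp (k * A (fst p)))"
          by (rule sm.mul, rule sm_const, rule sm.exp, rule sm.mul, rule sm_const, rule lA')
        then show ?thesis by simp
      qed
      show "sm S' (\<lambda>p. integral {a..fst p} (\<lambda>s. exp (- k * A s) * \<rho> (s, snd p) / \<tau> s))"
        by (rule sm.base[OF Gs])
    qed
    then show ?thesis unfolding V S'_def by (rule sm_smooth2)
  qed
  show "\<forall>p\<in>{a<..<\<beta>} \<times> P. \<exists>Vt Vb. (V has_derivative (\<lambda>h. Vt * fst h + Vb * snd h)) (at p) \<and>
        \<tau> (fst p) * Vt = k * V p - \<rho> p"
  proof
    fix p assume p: "p \<in> {a<..<\<beta>} \<times> P"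
    define t where "t = fst p"
    have pS: "p \<in> S'" using p by (simp add: S'_def)
    have t: "t \<in> {\<alpha><..<\<beta>}" using p a by (auto simp: t_def)
    have tn0: "\<tau> t \<noteq> 0" using tn t by blast
    define E where "E = exp (k * A t)"
    define G where "G = integral {a..t} (\<lambda>s. exp (- k * A s) * \<rho> (s, snd p) / \<tau> s)"
    have Ed: "((\<lambda>s. - exp (k * A s)) has_real_derivative - (E * (k * (1 / \<tau> t)))) (at t)"
      unfolding E_def by (rule derivative_eq_intros Ad[rule_format, OF t] refl | simp)+
    have Ed2: "((\<lambda>p. - exp (k * A (fst p))) has_derivative (\<lambda>h. - (E * (k * (1 / \<tau> t))) * fst h + 0 * snd h)) (at p)"
      by (rule deq[OF lift_deriv[OF Ed[unfolded t_def]]]) (simp add: t_def)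
    have M: "(V has_derivative (\<lambda>h. - E * (exp (- k * A t) * \<rho> p / \<tau> t * fst h + Gb p * snd h)
                 + (- (E * (k * (1 / \<tau> t))) * fst h + 0 * snd h) * G)) (at p)"
      unfolding V using has_derivative_mult[OF Ed2 Gd[rule_format, OF pS]] by (simp add: E_def G_def t_def)
    have Vp: "V p = - E * G" by (simp add: V E_def G_def t_def)
    have ee: "E * exp (- k * A t) = 1" by (simp add: E_def exp_add[symmetric])
    show "\<exists>Vt Vb. (V has_derivative (\<lambda>h. Vt * fst h + Vb * snd h)) (at p) \<and> \<tau> (fst p) * Vt = k * V p - \<rho> p"
    proof (intro exI conjI)
      show "(V has_derivative (\<lambda>h. (- E * (exp (- k * A t) * \<rho> p / \<tau> t) - E * (k * (1 / \<tau> t)) * G) * fst h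
              + (- E * Gb p) * snd h)) (at p)"
        by (rule deq[OF M]) (simp add: algebra_simps)
      have "\<tau> t * (- E * (exp (- k * A t) * \<rho> p / \<tau> t) - E * (k * (1 / \<tau> t)) * G)
          = - (E * exp (- k * A t)) * \<rho> p - k * E * G"
        using tn0 by (simp add: field_simps)
      also have "\<dots> = k * V p - \<rho> p" using ee Vp by simp
      finally show "\<tau> (fst p) * (- E * (exp (- k * A t) * \<rho> p / \<tau> t) - E * (k * (1 / \<tau> t)) * G) = k * V p - \<rho> p"
        by (simp add: t_def)
    qed
  qed
qed

lemma STR:
  fixes \<tau> :: "real \<Rightarrow> real"
  assumes ts: "smooth1_on UNIV \<tau>" and t0: "\<tau> t0 \<noteq> 0"
  shows "\<exists>\<alpha> \<beta> A. \<alpha> < t0 \<and> t0 < \<beta> \<and> (\<forall>t\<in>{\<alpha><..<\<beta>}. \<tau> t \<noteq> 0) \<and>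
     (\<forall>t\<in>{\<alpha><..<\<beta>}. (A has_real_derivative 1 / \<tau> t) (at t)) \<and> smooth1_on {\<alpha><..<\<beta>} A"
proof -
  have ct: "continuous_on UNIV \<tau>" by (rule smooth1_cont[OF ts])
  have op: "open {t. \<tau> t \<noteq> (\<lambda>_. 0) t}" by (rule open_Collect_neq[OF ct continuous_on_const])
  have mem: "t0 \<in> {t. \<tau> t \<noteq> (\<lambda>_. 0) t}" using t0 by simp
  obtain d where d0: "d > 0" "ball t0 d \<subseteq> {t. \<tau> t \<noteq> (\<lambda>_. 0) t}"
    using open_contains_ball[THEN iffD1, OF op, rule_format, OF mem] by blast
  have d: "d > 0" "ball t0 d \<subseteq> {t. \<tau> t \<noteq> 0}" using d0 by auto
  define A where "A t = integral {t0 - 3*d/4..t} (\<lambda>s. 1 / \<tau> s)" for t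
  have nz: "\<tau> s \<noteq> 0" if "t0 - 3*d/4 \<le> s" "s \<le> t0 + 3*d/4" for s
  proof -
    have "s \<in> ball t0 d" using that d(1) by (auto simp: dist_real_def abs_le_iff)
    then show ?thesis using d(2) by blast
  qed
  have ci: "continuous_on {t0 - 3*d/4..t0 + 3*d/4} (\<lambda>s. 1 / \<tau> s)"
  proof (rule continuous_on_divide[OF continuous_on_const continuous_on_subset[OF ct subset_UNIV]])
    show "\<forall>x\<in>{t0 - 3*d/4..t0 + 3*d/4}. \<tau> x \<noteq> 0" using nz by simp
  qed
  have Ad: "(A has_real_derivative 1 / \<tau> t) (at t)" if t: "t \<in> {t0 - d/2<..<t0 + d/2}" for t
  proof -
    have "(A has_real_derivative 1 / \<tau> t) (at t within {t0 - 3*d/4..t0 + 3*d/4})"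
      unfolding A_def by (rule integral_has_real_derivative[OF ci]) (use t d in auto)
    moreover have "at t within {t0 - 3*d/4..t0 + 3*d/4} = at t"
      by (rule at_within_interior) (use t d in auto)
    ultimately show ?thesis by simp
  qed
  have tn: "\<forall>t\<in>{t0 - d/2<..<t0 + d/2}. \<tau> t \<noteq> 0" using nz by auto
  have si: "smooth1_on {t0 - d/2<..<t0 + d/2} (\<lambda>t. 1 / \<tau> t)"
    by (rule smooth1_inv[OF _ smooth1_mono[OF ts] tn]) auto
  have "smooth1_on {t0 - d/2<..<t0 + d/2} A" by (rule smooth1_from_deriv[OF _ si]) (use Ad in blast)
  then show ?thesis using d Ad tn by (intro exI[of _ "t0 - d/2"] exI[of _ "t0 + d/2"] exI[of _ A]) auto
qed


lemma inj_deriv: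
  fixes B :: "real \<Rightarrow> real"
  assumes "\<forall>x\<in>{\<alpha><..<\<beta>}. (B has_real_derivative 1 / \<xi> x) (at x)" "\<forall>x\<in>{\<alpha><..<\<beta>}. \<xi> x \<noteq> 0"
  shows "inj_on B {\<alpha><..<\<beta>}"
proof -
  have *: "B x \<noteq> B y" if xy: "x \<in> {\<alpha><..<\<beta>}" "y \<in> {\<alpha><..<\<beta>}" "x < y" for x y
  proof
    assume eq: "B x = B y"
    have sub: "z \<in> {\<alpha><..<\<beta>}" if "x \<le> z" "z \<le> y" for z using xy that by auto
    have cont: "continuous_on {x..y} B"
    proof (intro continuous_at_imp_continuous_on ballI)
      fix z assume "z \<in> {x..y}"
      then have "(B has_real_derivative 1 / \<xi> z) (at z)" using assms(1) sub by auto
      then show "isCont B z" by (rule DERIV_isCont)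
    qed
    have der: "(B has_derivative (\<lambda>h. (1 / \<xi> z) * h)) (at z)" if "x < z" "z < y" for z
    proof -
      have "(B has_real_derivative 1 / \<xi> z) (at z)" using assms(1) sub that by auto
      then show ?thesis unfolding has_field_derivative_def by blast
    qed
    obtain z where z: "x < z" "z < y" "(\<lambda>h. (1 / \<xi> z) * h) = (\<lambda>v. 0)"
      using Rolle_deriv[OF xy(3) eq cont der] by blast
    have "1 / \<xi> z = 0" using fun_cong[OF z(3), of 1] by simp
    moreover have "\<xi> z \<noteq> 0" using assms(2) sub z by auto
    ultimately show False by simp
  qed
  show ?thesis unfolding inj_on_def
  proof (intro ballI impI)
    fix x y assume xy: "x \<in> {\<alpha><..<\<beta>}" "y \<in> {\<alpha><..<\<beta>}" "B x = B y"
    show "x = y"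
    proof (cases x y rule: linorder_cases)
      case less then show ?thesis using *[OF xy(1,2)] xy(3) by blast
    next
      case greater then show ?thesis using *[OF xy(2,1)] xy(3) by auto
    qed
  qed
qed

definition concl :: "(real \<Rightarrow> real) \<Rightarrow> (real \<Rightarrow> real) \<Rightarrow> (real \<times> real \<Rightarrow> real) \<Rightarrow> real \<Rightarrow> (real \<times> real) set \<Rightarrow> bool" where
 "concl \<tau> \<xi> r k W \<longleftrightarrow> (\<exists>I J. open I \<and> open J \<and> I \<noteq> {} \<and> J \<noteq> {} \<and> I \<times> J \<subseteq> W \<and>
    (\<exists>T X Y m c F. m \<noteq> 0 \<and> c \<noteq> 0 \<and> smooth2_on (I \<times> J) Y \<and>
      ((smooth1_on I T \<and> smooth1_on J X \<and>
        (\<forall>t\<in>I. deriv T t \<noteq> 0) \<and> (\<forall>x\<in>J. deriv X x \<noteq> 0) \<and>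
        canonical_form F (T ` I \<times> X ` J) \<and>
        (\<forall>t\<in>I. \<forall>x\<in>J. \<forall>u.
           (deriv T t * \<tau> t, deriv X x * \<xi> x,
            frechet_derivative Y (at (t,x)) (\<tau> t, \<xi> x) + m * (k * u + r (t,x)))
           = c *\<^sub>R F (T t, X x, m * u + Y (t,x))))
       \<or>
       (smooth1_on J T \<and> smooth1_on I X \<and>
        (\<forall>x\<in>J. deriv T x \<noteq> 0) \<and> (\<forall>t\<in>I. deriv X t \<noteq> 0) \<and>
        canonical_form F (T ` J \<times> X ` I) \<and>
        (\<forall>t\<in>I. \<forall>x\<in>J. \<forall>u.
           (deriv T x * \<xi> x, deriv X t * \<tau> t,
            frechet_derivative Y (at (t,x)) (\<tau> t, \<xi> x) + m * (k * u + r (t,x)))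
           = c *\<^sub>R F (T x, X t, m * u + Y (t,x)))))))"

lemma form1:
  assumes "open I" "open J" "I \<noteq> {}" "J \<noteq> {}" "I \<times> J \<subseteq> W" "m \<noteq> 0" "c \<noteq> 0" "smooth2_on (I \<times> J) Y"
    "smooth1_on I T" "smooth1_on J X" "\<forall>t\<in>I. deriv T t \<noteq> 0" "\<forall>x\<in>J. deriv X x \<noteq> 0"
    "canonical_form F (T ` I \<times> X ` J)"
    "\<forall>t\<in>I. \<forall>x\<in>J. \<forall>u.
           (deriv T t * \<tau> t, deriv X x * \<xi> x,
            frechet_derivative Y (at (t,x)) (\<tau> t, \<xi> x) + m * (k * u + r (t,x)))
           = c *\<^sub>R F (T t, X x, m * u + Y (t,x))"
  shows "concl \<tau> \<xi> r k W"
  unfolding concl_def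
  apply (rule exI[of _ I], rule exI[of _ J])
  apply (intro conjI assms(1-5))
  apply (rule exI[of _ T], rule exI[of _ X], rule exI[of _ Y], rule exI[of _ m], rule exI[of _ c], rule exI[of _ F])
  apply (intro conjI assms(6-8) disjI1)
  by (rule assms(9), rule assms(10), rule assms(11), rule assms(12), rule assms(13), rule assms(14))

lemma form2:
  assumes "open I" "open J" "I \<noteq> {}" "J \<noteq> {}" "I \<times> J \<subseteq> W" "m \<noteq> 0" "c \<noteq> 0" "smooth2_on (I \<times> J) Y"
    "smooth1_on J T" "smooth1_on I X" "\<forall>x\<in>J. deriv T x \<noteq> 0" "\<forall>t\<in>I. deriv X t \<noteq> 0"
    "canonical_form F (T ` J \<times> X ` I)"
    "\<forall>t\<in>I. \<forall>x\<in>J. \<forall>u.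
           (deriv T x * \<xi> x, deriv X t * \<tau> t,
            frechet_derivative Y (at (t,x)) (\<tau> t, \<xi> x) + m * (k * u + r (t,x)))
           = c *\<^sub>R F (T x, X t, m * u + Y (t,x))"
  shows "concl \<tau> \<xi> r k W"
  unfolding concl_def
  apply (rule exI[of _ I], rule exI[of _ J])
  apply (intro conjI assms(1-5))
  apply (rule exI[of _ T], rule exI[of _ X], rule exI[of _ Y], rule exI[of _ m], rule exI[of _ c], rule exI[of _ F])
  apply (intro conjI assms(6-8) disjI2)
  by (rule assms(9), rule assms(10), rule assms(11), rule assms(12), rule assms(13), rule assms(14))

lemma fd_at: "(Y has_derivative (\<lambda>h. a * fst h + b * snd h)) (at p) \<Longrightarrow>
   frechet_derivative Y (at p) (u, v) = a * u + b * v"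
proof -
  assume "(Y has_derivative (\<lambda>h. a * fst h + b * snd h)) (at p)"
  then have "frechet_derivative Y (at p) = (\<lambda>h. a * fst h + b * snd h)" by (rule frechet_derivative_at[symmetric])
  then show ?thesis by simp
qed

lemma deriv_id': "deriv (\<lambda>t. t) t = (1::real)"
  by (rule DERIV_imp_deriv) (rule DERIV_ident)

lemma deriv_cA: "(A has_real_derivative D) (at t) \<Longrightarrow> deriv (\<lambda>t. c * A t) t = c * D"
  by (rule DERIV_imp_deriv) (rule DERIV_cmult)

lemma caseD:
  assumes r: "smooth2_on UNIV r" and W: "open W" "(t0, x0) \<in> W" and nz: "k * u0 + r (t0, x0) \<noteq> 0"
    and z: "\<forall>t x. (t, x) \<in> W \<longrightarrow> \<tau> t = 0 \<and> \<xi> x = 0"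
  shows "concl \<tau> \<xi> r k W"
proof -
  obtain e where e: "e > 0" "{t0 - e<..<t0 + e} \<times> {x0 - e<..<x0 + e} \<subseteq> W"
    using open_rect[OF W] by blast
  define I where "I = {t0 - e<..<t0 + e}"
  define J where "J = {x0 - e<..<x0 + e}"
  have IJ: "open I" "open J" "t0 \<in> I" "x0 \<in> J" "I \<times> J \<subseteq> W" using e by (auto simp: I_def J_def)
  have zz: "\<tau> t = 0" "\<xi> x = 0" if "t \<in> I" "x \<in> J" for t x using z IJ(5) that by blast+
  show ?thesis
  proof (cases "k = 0")
    case True
    then have r0: "r (t0, x0) \<noteq> 0" using nz by simp
    show ?thesis
    proof (rule form1[where T="\<lambda>t. t" and X="\<lambda>x. x" and Y="\<lambda>_. 0" and m=1 and c=1 and F="\<lambda>(t,x,u). (0, 0, r (t,x))"])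
      show "canonical_form (\<lambda>(t,x,u). (0, 0, r (t,x))) ((\<lambda>t. t) ` I \<times> (\<lambda>x. x) ` J)"
        unfolding canonical_form_def using IJ r0 by (intro disjI2 exI[of _ r]) auto
      show "\<forall>t\<in>I. \<forall>x\<in>J. \<forall>u. (deriv (\<lambda>t. t) t * \<tau> t, deriv (\<lambda>x. x) x * \<xi> x,
            frechet_derivative (\<lambda>_. 0) (at (t,x)) (\<tau> t, \<xi> x) + 1 * (k * u + r (t,x)))
           = 1 *\<^sub>R (\<lambda>(t,x,u). (0, 0, r (t,x))) ((\<lambda>t. t) t, (\<lambda>x. x) x, 1 * u + (\<lambda>_. 0) (t,x))"
        using zz True by (simp add: deriv_id')
    qed (use IJ in \<open>auto simp: smooth2_const smooth1_id deriv_id'\<close>)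
  next
    case False
    have Ys: "smooth2_on (I \<times> J) (\<lambda>p. r p / k)"
      by (rule sm_smooth2, rule sm_div, rule sm.base, rule smooth2_mono[OF r]) (use False in \<open>auto intro: sm_const\<close>)
    have fd0: "frechet_derivative (\<lambda>p. r p / k) (at p) (0, 0) = 0" if "p \<in> I \<times> J" for p
    proof -
      obtain fa fb where "\<forall>p\<in>I \<times> J. ((\<lambda>p. r p / k) has_derivative (\<lambda>h. fa p * fst h + fb p * snd h)) (at p)"
        using Ys by (rule smooth2_D)
      then show ?thesis using fd_at that by fastforce
    qed
    show ?thesis
    proof (rule form1[where T="\<lambda>t. t" and X="\<lambda>x. x" and Y="\<lambda>p. r p / k" and m=1 and c=k and F="\<lambda>(t,x,u). (0, 0, u)"])
      show "canonical_form (\<lambda>(t,x,u). (0, 0, u)) ((\<lambda>t. t) ` I \<times> (\<lambda>x. x) ` J)"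
        unfolding canonical_form_def by blast
      show "\<forall>t\<in>I. \<forall>x\<in>J. \<forall>u. (deriv (\<lambda>t. t) t * \<tau> t, deriv (\<lambda>x. x) x * \<xi> x,
            frechet_derivative (\<lambda>p. r p / k) (at (t,x)) (\<tau> t, \<xi> x) + 1 * (k * u + r (t,x)))
           = k *\<^sub>R (\<lambda>(t,x,u). (0, 0, u)) ((\<lambda>t. t) t, (\<lambda>x. x) x, 1 * u + (\<lambda>p. r p / k) (t,x))"
        using zz fd0 False by (simp add: deriv_id' algebra_simps)
    qed (use IJ Ys False in \<open>auto simp: smooth1_id deriv_id'\<close>)
  qed
qed

lemma ceps: "(if k = 0 then 1 else k) * (if k = 0 then 0 else 1) = (k::real)" "(if k = 0 then 1 else k) \<noteq> (0::real)"
  by auto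

lemma caseB:
  assumes ts: "smooth1_on UNIV \<tau>" and r: "smooth2_on UNIV r" and W: "open W" "(t1, x1) \<in> W"
    and t1: "\<tau> t1 \<noteq> 0" and z: "\<forall>t x. (t, x) \<in> W \<longrightarrow> \<tau> t = 0 \<or> \<xi> x = 0"
  shows "concl \<tau> \<xi> r k W"
proof -
  obtain \<alpha> \<beta> A where ab: "\<alpha> < t1" "t1 < \<beta>" and tn: "\<forall>t\<in>{\<alpha><..<\<beta>}. \<tau> t \<noteq> 0"
    and Ad: "\<forall>t\<in>{\<alpha><..<\<beta>}. (A has_real_derivative 1 / \<tau> t) (at t)" and As: "smooth1_on {\<alpha><..<\<beta>} A"
    using STR[OF ts t1] by blast
  define a where "a = (\<alpha> + t1) / 2"
  have a: "\<alpha> < a" "a < t1" using ab by (auto simp: a_def)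
  have op: "open (W \<inter> ({a<..<\<beta>} \<times> UNIV))" using W by (intro open_Int open_Times) auto
  have mem: "(t1, x1) \<in> W \<inter> ({a<..<\<beta>} \<times> UNIV)" using W a ab by auto
  obtain e where e: "e > 0" "{t1 - e<..<t1 + e} \<times> {x1 - e<..<x1 + e} \<subseteq> W \<inter> ({a<..<\<beta>} \<times> UNIV)"
    using open_rect[OF op mem] by blast
  define I where "I = {t1 - e<..<t1 + e}"
  define J where "J = {x1 - e<..<x1 + e}"
  have IJ0: "open I" "open J" "t1 \<in> I" "x1 \<in> J" "I \<times> J \<subseteq> W" "convex J"
    "I \<times> J \<subseteq> {a<..<\<beta>} \<times> UNIV"
    using e by (auto simp: I_def J_def)
  have "I \<subseteq> {a<..<\<beta>}"
  proof
    fix t assume "t \<in> I"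
    then have "(t, x1) \<in> I \<times> J" using IJ0 by auto
    then show "t \<in> {a<..<\<beta>}" using IJ0(7) by blast
  qed
  note IJ = IJ0(1-5) this IJ0(6)
  have xi0: "\<xi> x = 0" if "x \<in> J" for x
  proof -
    have "(t1, x) \<in> W" using IJ that by blast
    then show ?thesis using z t1 by blast
  qed
  define V where "V = (\<lambda>p. - exp (k * A (fst p)) * integral {a..fst p} (\<lambda>s. exp (- k * A s) * r (s, snd p) / \<tau> s))"
  have tsab: "smooth1_on {\<alpha><..<\<beta>} \<tau>" by (rule smooth1_mono[OF ts]) auto
  have rab: "smooth2_on ({\<alpha><..<\<beta>} \<times> J) r" by (rule smooth2_mono[OF r]) auto
  note S = SOL[OF IJ(2) IJ(7) a(1) Ad As tsab tn rab V_def]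
  define c where "c = (if k = 0 then 1 else (k::real))"
  define \<epsilon> where "\<epsilon> = (if k = 0 then 0 else (1::real))"
  have ce: "c * \<epsilon> = k" "c \<noteq> 0" "\<epsilon> \<in> {0, 1}" by (auto simp: c_def \<epsilon>_def)
  have dT: "deriv (\<lambda>t. c * A t) t = c * (1 / \<tau> t)" if "t \<in> I" for t
  proof -
    have "t \<in> {\<alpha><..<\<beta>}" using IJ(6) that a by auto
    then show ?thesis by (rule_tac deriv_cA) (use Ad in blast)
  qed
  have tI: "\<tau> t \<noteq> 0" if "t \<in> I" for t using tn IJ(6) that a by auto
  show ?thesis
  proof (rule form1[where T="\<lambda>t. c * A t" and X="\<lambda>x. x" and Y=V and m=1 and c=c and F="\<lambda>(t,x,u). (1, 0, \<epsilon> * u)"])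
    show "smooth2_on (I \<times> J) V" by (rule smooth2_mono[OF S(1)]) (use IJ in auto)
    show "smooth1_on I (\<lambda>t. c * A t)"
      by (rule smooth1_mono[OF smooth1_cmul[OF _ As]]) (use IJ(6) a in auto)
    show "canonical_form (\<lambda>(t,x,u). (1, 0, \<epsilon> * u)) ((\<lambda>t. c * A t) ` I \<times> (\<lambda>x. x) ` J)"
      unfolding canonical_form_def using ce(3) by blast
    show "\<forall>t\<in>I. deriv (\<lambda>t. c * A t) t \<noteq> 0" using dT tI ce by auto
    show "\<forall>t\<in>I. \<forall>x\<in>J. \<forall>u. (deriv (\<lambda>t. c * A t) t * \<tau> t, deriv (\<lambda>x. x) x * \<xi> x,
            frechet_derivative V (at (t,x)) (\<tau> t, \<xi> x) + 1 * (k * u + r (t,x)))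
           = c *\<^sub>R (\<lambda>(t,x,u). (1, 0, \<epsilon> * u)) ((\<lambda>t. c * A t) t, (\<lambda>x. x) x, 1 * u + V (t,x))"
    proof (intro ballI allI)
      fix t x u assume t: "t \<in> I" and x: "x \<in> J"
      have "(t, x) \<in> {a<..<\<beta>} \<times> J" using t x IJ by auto
      then obtain Vt Vb where Vd: "(V has_derivative (\<lambda>h. Vt * fst h + Vb * snd h)) (at (t, x))"
        and Ve: "\<tau> t * Vt = k * V (t, x) - r (t, x)" using S(2) by fastforce
      have fd: "frechet_derivative V (at (t,x)) (\<tau> t, \<xi> x) = k * V (t, x) - r (t, x)"
        using fd_at[OF Vd] Ve xi0[OF x] by (simp add: mult.commute)
      show "(deriv (\<lambda>t. c * A t) t * \<tau> t, deriv (\<lambda>x. x) x * \<xi> x,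
            frechet_derivative V (at (t,x)) (\<tau> t, \<xi> x) + 1 * (k * u + r (t,x)))
           = c *\<^sub>R (\<lambda>(t,x,u). (1, 0, \<epsilon> * u)) ((\<lambda>t. c * A t) t, (\<lambda>x. x) x, 1 * u + V (t,x))"
        using dT[OF t] tI[OF t] fd xi0[OF x] ce(1)
        by (simp add: deriv_id' algebra_simps flip: ce(1))
    qed
  qed (use IJ ce in \<open>auto simp: smooth1_id deriv_id'\<close>)
qed

lemma swap_deriv:
  assumes "(V has_derivative (\<lambda>h. a * fst h + b * snd h)) (at (x, t))"
  shows "((\<lambda>p. V (snd p, fst p)) has_derivative (\<lambda>h. b * fst h + a * snd h)) (at (t, x))"
proof -
  have sw: "((\<lambda>p. (snd p, fst p)) has_derivative (\<lambda>h. (snd h, fst h))) (at (t, x))"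
    by (rule has_derivative_Pair[OF has_derivative_snd[OF has_derivative_ident] has_derivative_fst[OF has_derivative_ident]])
  have D': "(V has_derivative (\<lambda>h. a * fst h + b * snd h)) (at ((\<lambda>p. (snd p, fst p)) (t, x)))"
    using assms by simp
  show ?thesis by (rule deq[OF has_derivative_compose[OF sw D']]) (simp add: algebra_simps)
qed

lemma caseC:
  assumes xs: "smooth1_on UNIV \<xi>" and r: "smooth2_on UNIV r" and W: "open W" "(t1, x1) \<in> W"
    and x1: "\<xi> x1 \<noteq> 0" and z: "\<forall>t x. (t, x) \<in> W \<longrightarrow> \<tau> t = 0"
  shows "concl \<tau> \<xi> r k W"
proof -
  obtain \<alpha> \<beta> B where ab: "\<alpha> < x1" "x1 < \<beta>" and xn: "\<forall>t\<in>{\<alpha><..<\<beta>}. \<xi> t \<noteq> 0"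
    and Bd: "\<forall>t\<in>{\<alpha><..<\<beta>}. (B has_real_derivative 1 / \<xi> t) (at t)" and Bs: "smooth1_on {\<alpha><..<\<beta>} B"
    using STR[OF xs x1] by blast
  define a where "a = (\<alpha> + x1) / 2"
  have a: "\<alpha> < a" "a < x1" using ab by (auto simp: a_def)
  have op: "open (W \<inter> (UNIV \<times> {a<..<\<beta>}))" using W by (intro open_Int open_Times) auto
  have mem: "(t1, x1) \<in> W \<inter> (UNIV \<times> {a<..<\<beta>})" using W a ab by auto
  obtain e where e: "e > 0" "{t1 - e<..<t1 + e} \<times> {x1 - e<..<x1 + e} \<subseteq> W \<inter> (UNIV \<times> {a<..<\<beta>})"
    using open_rect[OF op mem] by blast
  define I where "I = {t1 - e<..<t1 + e}"
  define J where "J = {x1 - e<..<x1 + e}"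
  have IJ0: "open I" "open J" "t1 \<in> I" "x1 \<in> J" "I \<times> J \<subseteq> W" "convex I"
    "I \<times> J \<subseteq> UNIV \<times> {a<..<\<beta>}"
    using e by (auto simp: I_def J_def)
  have "J \<subseteq> {a<..<\<beta>}"
  proof
    fix x assume "x \<in> J"
    then have "(t1, x) \<in> I \<times> J" using IJ0 by auto
    then show "x \<in> {a<..<\<beta>}" using IJ0(7) by blast
  qed
  note IJ = IJ0(1-5) this IJ0(6)
  have tau0: "\<tau> t = 0" if "t \<in> I" for t
  proof -
    have "(t, x1) \<in> W" using IJ that by blast
    then show ?thesis using z by blast
  qed
  define V where "V = (\<lambda>p. - exp (k * B (fst p)) * integral {a..fst p} (\<lambda>s. exp (- k * B s) * r (snd (s, snd p), fst (s, snd p)) / \<xi> s))"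
  have xsab: "smooth1_on {\<alpha><..<\<beta>} \<xi>" by (rule smooth1_mono[OF xs]) auto
  have rab: "smooth2_on ({\<alpha><..<\<beta>} \<times> I) (\<lambda>q. r (snd q, fst q))"
    by (rule sm_smooth2, rule sm.comp[OF r sm_snd sm_fst]) auto
  note S = SOL[OF IJ(1) IJ(7) a(1) Bd Bs xsab xn rab V_def]
  define c where "c = (if k = 0 then 1 else (k::real))"
  define \<epsilon> where "\<epsilon> = (if k = 0 then 0 else (1::real))"
  have ce: "c * \<epsilon> = k" "c \<noteq> 0" "\<epsilon> \<in> {0, 1}" by (auto simp: c_def \<epsilon>_def)
  have dT: "deriv (\<lambda>t. c * B t) t = c * (1 / \<xi> t)" if "t \<in> J" for t
  proof -
    have "t \<in> {\<alpha><..<\<beta>}" using IJ(6) that a by auto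
    then show ?thesis by (rule_tac deriv_cA) (use Bd in blast)
  qed
  have xJ: "\<xi> t \<noteq> 0" if "t \<in> J" for t using xn IJ(6) that a by auto
  show ?thesis
  proof (rule form2[where T="\<lambda>t. c * B t" and X="\<lambda>x. x" and Y="\<lambda>p. V (snd p, fst p)" and m=1 and c=c and F="\<lambda>(t,x,u). (1, 0, \<epsilon> * u)"])
    show "smooth2_on (I \<times> J) (\<lambda>p. V (snd p, fst p))"
      by (rule sm_smooth2, rule sm.comp[OF S(1) sm_snd sm_fst]) (use IJ in auto)
    show "smooth1_on J (\<lambda>t. c * B t)"
      by (rule smooth1_mono[OF smooth1_cmul[OF _ Bs]]) (use IJ(6) a in auto)
    show "canonical_form (\<lambda>(t,x,u). (1, 0, \<epsilon> * u)) ((\<lambda>t. c * B t) ` J \<times> (\<lambda>x. x) ` I)"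
      unfolding canonical_form_def using ce(3) by blast
    show "\<forall>t\<in>J. deriv (\<lambda>t. c * B t) t \<noteq> 0" using dT xJ ce by auto
    show "\<forall>t\<in>I. \<forall>x\<in>J. \<forall>u. (deriv (\<lambda>t. c * B t) x * \<xi> x, deriv (\<lambda>x. x) t * \<tau> t,
            frechet_derivative (\<lambda>p. V (snd p, fst p)) (at (t,x)) (\<tau> t, \<xi> x) + 1 * (k * u + r (t,x)))
           = c *\<^sub>R (\<lambda>(t,x,u). (1, 0, \<epsilon> * u)) ((\<lambda>t. c * B t) x, (\<lambda>x. x) t, 1 * u + (\<lambda>p. V (snd p, fst p)) (t,x))"
    proof (intro ballI allI)
      fix t x u assume t: "t \<in> I" and x: "x \<in> J"
      have "(x, t) \<in> {a<..<\<beta>} \<times> I" using t x IJ by auto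
      then obtain Vt Vb where Vd: "(V has_derivative (\<lambda>h. Vt * fst h + Vb * snd h)) (at (x, t))"
        and Ve: "\<xi> x * Vt = k * V (x, t) - r (t, x)" using S(2) by fastforce
      have fd: "frechet_derivative (\<lambda>p. V (snd p, fst p)) (at (t,x)) (\<tau> t, \<xi> x) = k * V (x, t) - r (t, x)"
        using fd_at[OF swap_deriv[OF Vd]] Ve tau0[OF t] by (simp add: mult.commute)
      show "(deriv (\<lambda>t. c * B t) x * \<xi> x, deriv (\<lambda>x. x) t * \<tau> t,
            frechet_derivative (\<lambda>p. V (snd p, fst p)) (at (t,x)) (\<tau> t, \<xi> x) + 1 * (k * u + r (t,x)))
           = c *\<^sub>R (\<lambda>(t,x,u). (1, 0, \<epsilon> * u)) ((\<lambda>t. c * B t) x, (\<lambda>x. x) t, 1 * u + (\<lambda>p. V (snd p, fst p)) (t,x))"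
        using dT[OF x] xJ[OF x] fd tau0[OF t] ce(1)
        by (simp add: deriv_id' algebra_simps flip: ce(1))
    qed
  qed (use IJ ce in \<open>auto simp: smooth1_id deriv_id'\<close>)
qed

lemma lift_deriv_snd: "(f has_real_derivative D) (at (snd p)) \<Longrightarrow>
   ((\<lambda>p. f (snd p)) has_derivative (\<lambda>h. 0 * fst h + D * snd h)) (at p)"
  unfolding has_field_derivative_def
  by (rule deq[OF has_derivative_compose[OF has_derivative_snd[OF has_derivative_ident]]]) simp_all

lemma caseA:
  assumes ts: "smooth1_on UNIV \<tau>" and xs: "smooth1_on UNIV \<xi>" and r: "smooth2_on UNIV r"
    and W: "open W" "(t1, x1) \<in> W" and t1: "\<tau> t1 \<noteq> 0" and x1: "\<xi> x1 \<noteq> 0"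
  shows "concl \<tau> \<xi> r k W"
proof -
  obtain \<alpha>A \<beta>A A where abA: "\<alpha>A < t1" "t1 < \<beta>A" and tn: "\<forall>t\<in>{\<alpha>A<..<\<beta>A}. \<tau> t \<noteq> 0"
    and Ad: "\<forall>t\<in>{\<alpha>A<..<\<beta>A}. (A has_real_derivative 1 / \<tau> t) (at t)" and As: "smooth1_on {\<alpha>A<..<\<beta>A} A"
    using STR[OF ts t1] by blast
  obtain \<alpha>B \<beta>B B where abB: "\<alpha>B < x1" "x1 < \<beta>B" and xn: "\<forall>t\<in>{\<alpha>B<..<\<beta>B}. \<xi> t \<noteq> 0"
    and Bd: "\<forall>t\<in>{\<alpha>B<..<\<beta>B}. (B has_real_derivative 1 / \<xi> t) (at t)" and Bs: "smooth1_on {\<alpha>B<..<\<beta>B} B"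
    using STR[OF xs x1] by blast
  define JB where "JB = {\<alpha>B<..<\<beta>B}"
  have injB: "inj_on B JB" unfolding JB_def by (rule inj_deriv[OF Bd xn])
  define g where "g = the_inv_into JB B"
  have gB: "\<forall>x\<in>JB. g (B x) = x" using injB by (simp add: g_def the_inv_into_f_f)
  have cB: "continuous_on JB B" unfolding JB_def by (rule smooth1_cont[OF Bs])
  define K where "K = B ` JB"
  have oK: "open K" unfolding K_def by (rule invariance_of_domain[OF cB _ injB]) (simp add: JB_def)
  have gs: "smooth1_on K g" unfolding K_def
    by (rule smooth1_inverse(1)[OF _ Bs[folded JB_def] Bd[folded JB_def] smooth1_mono[OF xs] xn[folded JB_def] gB])
       (auto simp: JB_def)
  have cA: "continuous_on {\<alpha>A<..<\<beta>A} A" by (rule smooth1_cont[OF As])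
  define p1 where "p1 = A t1 - B x1"
  define SA where "SA = {\<alpha>A<..<\<beta>A} \<times> (UNIV :: real set)"
  have cAS: "continuous_on SA (\<lambda>q. A (fst q) - snd q)"
  proof (rule continuous_on_diff)
    show "continuous_on SA (\<lambda>q. A (fst q))"
      by (rule continuous_on_compose2[OF cA continuous_on_fst[OF continuous_on_id]]) (auto simp: SA_def)
    show "continuous_on SA snd" by (rule continuous_on_snd[OF continuous_on_id])
  qed
  define D where "D = (\<lambda>q. A (fst q) - snd q) -` K \<inter> SA"
  have oSA: "open SA" by (simp add: SA_def open_Times)
  have oD: "open D" unfolding D_def
    using continuous_on_open_vimage[OF oSA, THEN iffD1, OF cAS] oK by blast
  have mD: "(t1, p1) \<in> D" using abA abB by (auto simp: D_def SA_def p1_def K_def JB_def)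
  obtain e1 where e1: "e1 > 0" "{t1 - e1<..<t1 + e1} \<times> {p1 - e1<..<p1 + e1} \<subseteq> D"
    using open_rect[OF oD mD] by blast
  define \<alpha> where "\<alpha> = t1 - e1"
  define \<beta> where "\<beta> = t1 + e1"
  define P where "P = {p1 - e1<..<p1 + e1}"
  define a where "a = t1 - e1 / 2"
  have a: "\<alpha> < a" "a < t1" "t1 < \<beta>" using e1 by (auto simp: \<alpha>_def \<beta>_def a_def)
  have p1P: "p1 \<in> P" using e1 by (auto simp: P_def)
  have S0D: "{\<alpha><..<\<beta>} \<times> P \<subseteq> D" using e1 by (simp add: \<alpha>_def \<beta>_def P_def)
  have abs: "{\<alpha><..<\<beta>} \<subseteq> {\<alpha>A<..<\<beta>A}"
  proof
    fix t assume "t \<in> {\<alpha><..<\<beta>}"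
    then have "(t, p1) \<in> D" using S0D p1P by blast
    then show "t \<in> {\<alpha>A<..<\<beta>A}" by (auto simp: D_def SA_def)
  qed
  have inK: "A (fst q) - snd q \<in> K" if "q \<in> {\<alpha><..<\<beta>} \<times> P" for q using S0D that by (auto simp: D_def)
  define \<rho> where "\<rho> = (\<lambda>q. r (fst q, g (A (fst q) - snd q)))"
  have lA: "sm ({\<alpha><..<\<beta>} \<times> P) (\<lambda>p. A (fst p))"
    by (rule sm.base, rule smooth2_lift_fst[OF As]) (use abs in auto)
  have G2: "sm ({\<alpha><..<\<beta>} \<times> P) (\<lambda>p. g (A (fst p) - snd p))"
  proof -
    have Lg: "smooth2_on (K \<times> UNIV) (\<lambda>q. g (fst q))" by (rule smooth2_lift_fst[OF gs]) auto
    have "sm ({\<alpha><..<\<beta>} \<times> P) (\<lambda>p. g (fst (A (fst p) - snd p, (0::real))))"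
    proof (rule sm.comp[OF Lg])
      show "sm ({\<alpha><..<\<beta>} \<times> P) (\<lambda>p. A (fst p) - snd p)" by (rule sm_diff[OF lA sm_snd])
      show "sm ({\<alpha><..<\<beta>} \<times> P) (\<lambda>p. 0)" by (rule sm_const)
      show "\<forall>p\<in>{\<alpha><..<\<beta>} \<times> P. (A (fst p) - snd p, 0) \<in> K \<times> UNIV" using inK by auto
    qed
    then show ?thesis by simp
  qed
  have rhos: "smooth2_on ({\<alpha><..<\<beta>} \<times> P) \<rho>"
    unfolding \<rho>_def by (rule sm_smooth2, rule sm.comp[OF r sm_fst G2]) auto
  have oP: "open P" "convex P" by (auto simp: P_def)
  have Ad': "\<forall>t\<in>{\<alpha><..<\<beta>}. (A has_real_derivative 1 / \<tau> t) (at t)" using Ad abs by blast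
  have tn': "\<forall>t\<in>{\<alpha><..<\<beta>}. \<tau> t \<noteq> 0" using tn abs by blast
  define V where "V = (\<lambda>p. - exp (k * A (fst p)) * integral {a..fst p} (\<lambda>s. exp (- k * A s) * \<rho> (s, snd p) / \<tau> s))"
  note S = SOL[OF oP a(1) Ad' smooth1_mono[OF As abs] smooth1_mono[OF ts subset_UNIV] tn' rhos V_def]
  have sub2: "{a<..<\<beta>} \<subseteq> {\<alpha>A<..<\<beta>A}"
  proof -
    have "{a<..<\<beta>} \<subseteq> {\<alpha><..<\<beta>}" using a by auto
    then show ?thesis using abs by (rule subset_trans)
  qed
  have cA2: "continuous_on ({a<..<\<beta>} \<times> JB) (\<lambda>q. A (fst q) - B (snd q))"
  proof (rule continuous_on_diff)
    show "continuous_on ({a<..<\<beta>} \<times> JB) (\<lambda>q. A (fst q))"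
      by (rule continuous_on_compose2[OF cA continuous_on_fst[OF continuous_on_id]]) (use sub2 in fastforce)
    show "continuous_on ({a<..<\<beta>} \<times> JB) (\<lambda>q. B (snd q))"
      by (rule continuous_on_compose2[OF cB continuous_on_snd[OF continuous_on_id]]) auto
  qed
  define O2 where "O2 = W \<inter> ((\<lambda>q. A (fst q) - B (snd q)) -` P \<inter> ({a<..<\<beta>} \<times> JB))"
  have oS2: "open ({a<..<\<beta>} \<times> JB)" by (simp add: JB_def open_Times)
  have "open ((\<lambda>q. A (fst q) - B (snd q)) -` P \<inter> ({a<..<\<beta>} \<times> JB))"
    using continuous_on_open_vimage[OF oS2, THEN iffD1, OF cA2] oP(1) by blast
  then have oO2: "open O2" unfolding O2_def using W(1) by (rule open_Int[rotated])
  have mO2: "(t1, x1) \<in> O2" using W a abB p1P by (auto simp: O2_def JB_def p1_def)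
  obtain e where e: "e > 0" "{t1 - e<..<t1 + e} \<times> {x1 - e<..<x1 + e} \<subseteq> O2"
    using open_rect[OF oO2 mO2] by blast
  define I where "I = {t1 - e<..<t1 + e}"
  define J where "J = {x1 - e<..<x1 + e}"
  have IJ0: "open I" "open J" "t1 \<in> I" "x1 \<in> J" "I \<times> J \<subseteq> O2"
    using e by (auto simp: I_def J_def)
  have IJW: "I \<times> J \<subseteq> W" using IJ0(5) by (auto simp: O2_def)
  have tI: "t \<in> {a<..<\<beta>}" if "t \<in> I" for t
  proof -
    have "(t, x1) \<in> O2" using IJ0 that by blast
    then show ?thesis by (auto simp: O2_def)
  qed
  have xJ: "x \<in> JB" if "x \<in> J" for x
  proof -
    have "(t1, x) \<in> O2" using IJ0 that by blast
    then show ?thesis by (auto simp: O2_def)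
  qed
  have pP: "A t - B x \<in> P" if "t \<in> I" "x \<in> J" for t x
  proof -
    have "(t, x) \<in> O2" using IJ0 that by blast
    then show ?thesis by (auto simp: O2_def)
  qed
  have tA: "t \<in> {\<alpha>A<..<\<beta>A}" if "t \<in> I" for t using tI[OF that] sub2 by blast
  define c where "c = (if k = 0 then 1 else (k::real))"
  define \<epsilon> where "\<epsilon> = (if k = 0 then 0 else (1::real))"
  have ce: "c * \<epsilon> = k" "c \<noteq> 0" "\<epsilon> \<in> {0, 1}" by (auto simp: c_def \<epsilon>_def)
  have dT: "deriv (\<lambda>t. c * A t) t = c * (1 / \<tau> t)" if "t \<in> I" for t
    by (rule deriv_cA) (use Ad tA[OF that] in blast)
  have dX: "deriv (\<lambda>t. c * B t) x = c * (1 / \<xi> x)" if "x \<in> J" for x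
    by (rule deriv_cA) (use Bd xJ[OF that] in \<open>auto simp: JB_def\<close>)
  have tnz: "\<tau> t \<noteq> 0" if "t \<in> I" for t using tn tA[OF that] by blast
  have xnz: "\<xi> x \<noteq> 0" if "x \<in> J" for x using xn xJ[OF that] by (auto simp: JB_def)
  define Y where "Y = (\<lambda>q. V (fst q, A (fst q) - B (snd q)))"
  show ?thesis
  proof (rule form1[where T="\<lambda>t. c * A t" and X="\<lambda>x. c * B x" and Y=Y and m=1 and c=c and F="\<lambda>(t,x,u). (1, 1, \<epsilon> * u)"])
    show "smooth2_on (I \<times> J) Y" unfolding Y_def
    proof (rule sm_smooth2, rule sm.comp[OF S(1) sm_fst])
      show "sm (I \<times> J) (\<lambda>q. A (fst q) - B (snd q))"
      proof (rule sm_diff)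
        show "sm (I \<times> J) (\<lambda>q. A (fst q))" by (rule sm.base, rule smooth2_lift_fst[OF As]) (use tA in auto)
        show "sm (I \<times> J) (\<lambda>q. B (snd q))" by (rule sm.base, rule smooth2_lift_snd[OF Bs]) (use xJ in \<open>auto simp: JB_def\<close>)
      qed
      show "\<forall>p\<in>I \<times> J. (fst p, A (fst p) - B (snd p)) \<in> {a<..<\<beta>} \<times> P" using tI pP by auto
    qed
    show "smooth1_on I (\<lambda>t. c * A t)"
      by (rule smooth1_mono[OF smooth1_cmul[OF _ As]]) (use tA in auto)
    show "smooth1_on J (\<lambda>t. c * B t)"
      by (rule smooth1_mono[OF smooth1_cmul[OF _ Bs]]) (use xJ in \<open>auto simp: JB_def\<close>)
    show "canonical_form (\<lambda>(t,x,u). (1, 1, \<epsilon> * u)) ((\<lambda>t. c * A t) ` I \<times> (\<lambda>x. c * B x) ` J)"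
      unfolding canonical_form_def using ce(3) by blast
    show "\<forall>t\<in>I. deriv (\<lambda>t. c * A t) t \<noteq> 0" using dT tnz ce by auto
    show "\<forall>x\<in>J. deriv (\<lambda>t. c * B t) x \<noteq> 0" using dX xnz ce by auto
    show "\<forall>t\<in>I. \<forall>x\<in>J. \<forall>u. (deriv (\<lambda>t. c * A t) t * \<tau> t, deriv (\<lambda>x. c * B x) x * \<xi> x,
            frechet_derivative Y (at (t,x)) (\<tau> t, \<xi> x) + 1 * (k * u + r (t,x)))
           = c *\<^sub>R (\<lambda>(t,x,u). (1, 1, \<epsilon> * u)) ((\<lambda>t. c * A t) t, (\<lambda>x. c * B x) x, 1 * u + Y (t,x))"
    proof (intro ballI allI)
      fix t x u assume t: "t \<in> I" and x: "x \<in> J"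
      have "(t, A t - B x) \<in> {a<..<\<beta>} \<times> P" using tI[OF t] pP[OF t x] by auto
      then obtain Vt Vb where Vd: "(V has_derivative (\<lambda>h. Vt * fst h + Vb * snd h)) (at (t, A t - B x))"
        and Ve: "\<tau> t * Vt = k * V (t, A t - B x) - \<rho> (t, A t - B x)" using S(2) by fastforce
      have rho: "\<rho> (t, A t - B x) = r (t, x)" using gB xJ[OF x] by (simp add: \<rho>_def)
      have inner: "((\<lambda>q. (fst q, A (fst q) - B (snd q))) has_derivative
          (\<lambda>h. (fst h, ((1 / \<tau> t) * fst h + 0 * snd h) - (0 * fst h + (1 / \<xi> x) * snd h)))) (at (t, x))"
      proof (rule has_derivative_Pair[OF has_derivative_fst[OF has_derivative_ident]], rule has_derivative_diff)
        show "((\<lambda>q. A (fst q)) has_derivative (\<lambda>h. 1 / \<tau> t * fst h + 0 * snd h)) (at (t, x))"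
          by (rule lift_deriv) (use Ad tA[OF t] in simp)
        show "((\<lambda>q. B (snd q)) has_derivative (\<lambda>h. 0 * fst h + 1 / \<xi> x * snd h)) (at (t, x))"
          by (rule lift_deriv_snd) (use Bd xJ[OF x] in \<open>simp add: JB_def\<close>)
      qed
      have Vd': "(V has_derivative (\<lambda>h. Vt * fst h + Vb * snd h)) (at ((\<lambda>q. (fst q, A (fst q) - B (snd q))) (t, x)))"
        using Vd by simp
      have Yd: "(Y has_derivative (\<lambda>h. (Vt + Vb * (1 / \<tau> t)) * fst h + (- (Vb * (1 / \<xi> x))) * snd h)) (at (t, x))"
        unfolding Y_def by (rule deq[OF has_derivative_compose[OF inner Vd']]) (simp add: algebra_simps)
      have "frechet_derivative Y (at (t,x)) (\<tau> t, \<xi> x) = (Vt + Vb * (1 / \<tau> t)) * \<tau> t + (- (Vb * (1 / \<xi> x))) * \<xi> x"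
        by (rule fd_at[OF Yd])
      also have "\<dots> = \<tau> t * Vt" using tnz[OF t] xnz[OF x] by (simp add: field_simps)
      also have "\<dots> = k * Y (t, x) - r (t, x)" using Ve rho by (simp add: Y_def)
      finally have fd: "frechet_derivative Y (at (t,x)) (\<tau> t, \<xi> x) = k * Y (t, x) - r (t, x)" .
      show "(deriv (\<lambda>t. c * A t) t * \<tau> t, deriv (\<lambda>x. c * B x) x * \<xi> x,
            frechet_derivative Y (at (t,x)) (\<tau> t, \<xi> x) + 1 * (k * u + r (t,x)))
           = c *\<^sub>R (\<lambda>(t,x,u). (1, 1, \<epsilon> * u)) ((\<lambda>t. c * A t) t, (\<lambda>x. c * B x) x, 1 * u + Y (t,x))"
        using dT[OF t] dX[OF x] tnz[OF t] xnz[OF x] fd ce(1)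
        by (simp add: algebra_simps flip: ce(1))
    qed
  qed (use IJ0 IJW ce in auto)
qed

theorem theorem4:
  fixes \<tau> \<xi> :: "real \<Rightarrow> real" and r :: "real \<times> real \<Rightarrow> real" and k :: real
    and W :: "(real \<times> real) set"
  assumes "smooth1_on UNIV \<tau>" and "smooth1_on UNIV \<xi>" and "smooth2_on UNIV r"
    and "open W"
    and "\<exists>t x u. (t,x) \<in> W \<and> (\<tau> t, \<xi> x, k * u + r (t,x)) \<noteq> (0,0,0)"
  shows "\<exists>I J. open I \<and> open J \<and> I \<noteq> {} \<and> J \<noteq> {} \<and> I \<times> J \<subseteq> W \<and>
    (\<exists>T X Y m c F. m \<noteq> 0 \<and> c \<noteq> 0 \<and> smooth2_on (I \<times> J) Y \<and>
      ((smooth1_on I T \<and> smooth1_on J X \<and>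
        (\<forall>t\<in>I. deriv T t \<noteq> 0) \<and> (\<forall>x\<in>J. deriv X x \<noteq> 0) \<and>
        canonical_form F (T ` I \<times> X ` J) \<and>
        (\<forall>t\<in>I. \<forall>x\<in>J. \<forall>u.
           (deriv T t * \<tau> t, deriv X x * \<xi> x,
            frechet_derivative Y (at (t,x)) (\<tau> t, \<xi> x) + m * (k * u + r (t,x)))
           = c *\<^sub>R F (T t, X x, m * u + Y (t,x))))
       \<or>
       (smooth1_on J T \<and> smooth1_on I X \<and>
        (\<forall>x\<in>J. deriv T x \<noteq> 0) \<and> (\<forall>t\<in>I. deriv X t \<noteq> 0) \<and>
        canonical_form F (T ` J \<times> X ` I) \<and>
        (\<forall>t\<in>I. \<forall>x\<in>J. \<forall>u.
           (deriv T x * \<xi> x, deriv X t * \<tau> t,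
            frechet_derivative Y (at (t,x)) (\<tau> t, \<xi> x) + m * (k * u + r (t,x)))
           = c *\<^sub>R F (T x, X t, m * u + Y (t,x))))))"
proof -
  obtain t0 x0 u0 where W0: "(t0, x0) \<in> W" and nz: "(\<tau> t0, \<xi> x0, k * u0 + r (t0, x0)) \<noteq> (0, 0, 0)"
    using assms(5) by blast
  have "concl \<tau> \<xi> r k W"
  proof (cases "\<exists>t x. (t, x) \<in> W \<and> \<tau> t \<noteq> 0 \<and> \<xi> x \<noteq> 0")
    case True
    then obtain t1 x1 where "(t1, x1) \<in> W" "\<tau> t1 \<noteq> 0" "\<xi> x1 \<noteq> 0" by blast
    then show ?thesis by (rule caseA[OF assms(1,2,3,4)])
  next
    case nA: False
    show ?thesis
    proof (cases "\<exists>t x. (t, x) \<in> W \<and> \<tau> t \<noteq> 0")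
      case True
      then obtain t1 x1 where t1: "(t1, x1) \<in> W" "\<tau> t1 \<noteq> 0" by blast
      have z: "\<forall>t x. (t, x) \<in> W \<longrightarrow> \<tau> t = 0 \<or> \<xi> x = 0" using nA by blast
      show ?thesis by (rule caseB[OF assms(1,3,4) t1 z])
    next
      case nB: False
      have z: "\<forall>t x. (t, x) \<in> W \<longrightarrow> \<tau> t = 0" using nB by blast
      show ?thesis
      proof (cases "\<exists>t x. (t, x) \<in> W \<and> \<xi> x \<noteq> 0")
        case True
        then obtain t1 x1 where x1: "(t1, x1) \<in> W" "\<xi> x1 \<noteq> 0" by blast
        show ?thesis by (rule caseC[OF assms(2,3,4) x1 z])
      next
        case False
        have z2: "\<forall>t x. (t, x) \<in> W \<longrightarrow> \<tau> t = 0 \<and> \<xi> x = 0" using False z by blast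
        have "\<tau> t0 = 0" "\<xi> x0 = 0" using z2 W0 by blast+
        then have "k * u0 + r (t0, x0) \<noteq> 0" using nz by simp
        show ?thesis by (rule caseD[OF assms(3,4) W0 \<open>k * u0 + r (t0, x0) \<noteq> 0\<close> z2])
      qed
    qed
  qed
  then show ?thesis unfolding concl_def .
qed

end
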